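(* Let $V,W$ be separable Banach spaces, $\alpha,\beta,\gamma\in(0,1)$ with $\alpha+\beta\gamma>1$, and $A\in C^\alpha_tC^{1+\beta}_{V,W,\mathrm{loc}}$. Then the map $F:C^\gamma_tV\to C^\alpha_tW$, $F(x)=\int_0^\cdot A(\mathrm{d} s,x_s)$, is Fréchet differentiable with \[ DF(x):y\mapsto\int_0^\cdot DA(\mathrm{d} s,x_s)y_s. \]
   Context: Fix $T>0$. For a path $f:[0,T]\to E$, $\|f\|_\gamma=\sup_t\|f_t\|_E+\sup_{s<t}\|f_t-f_s\|_E/|t-s|^\gamma$; $C^\gamma_tE$ is the Banach space of paths with finite norm. For $g:V\to W$ and $R>0$, $\|g\|_{\beta,R}=\sup_{x\ne y,\|x\|,\|y\|\le R}\|g(x)-g(y)\|_W/\|x-y\|_V^\beta+\sup_{\|x\|\le R}\|g(x)\|_W$. Fields $A:[0,T]\times V\to W$ satisfy $A(0,\cdot)=0$, $A_{s,t}(x)=A(t,x)-A(s,x)$; $A\in C^\alpha_tC^{1+\beta}_{V,W,\mathrm{loc}}$ means $A(t,\cdot)$ Fréchet differentiable for all $t$ and for all $R>0$, $\sup_{s<t}(\|A_{s,t}\|_{\beta,R}+\|DA_{s,t}\|_{\beta,R})/|t-s|^\alpha<\infty$ ($DA$ valued in $\mathcal L(V;W)$). Integrals are limits over partitions of $[0,t]$: $\int_0^tA(\mathrm{d} s,x_s)=\lim_{|\Pi|\to0}\sum_iA_{t_i,t_{i+1}}(x_{t_i})$ and $\int_0^tDA(\mathrm{d} s,x_s)y_s=\lim_{|\Pi|\to0}\sum_iDA_{t_i,t_{i+1}}(x_{t_i})(y_{t_i})$.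 *)

theory Defs
  imports "HOL-Analysis.Analysis"
begin

text \<open>Paths are functions real => E; only their values on [0,T] matter.\<close>

definition hoelder_sup :: "real \<Rightarrow> (real \<Rightarrow> 'a::real_normed_vector) \<Rightarrow> real set" where
  "hoelder_sup T f = (\<lambda>t. norm (f t)) ` {0..T}"

definition hoelder_quot :: "real \<Rightarrow> real \<Rightarrow> (real \<Rightarrow> 'a::real_normed_vector) \<Rightarrow> real set" where
  "hoelder_quot g T f =
     (\<lambda>(s,t). norm (f t - f s) / (t - s) powr g) ` {(s,t). 0 \<le> s \<and> s < t \<and> t \<le> T}"

definition hoelder_path :: "real \<Rightarrow> real \<Rightarrow> (real \<Rightarrow> 'a::real_normed_vector) \<Rightarrow> bool" where
  "hoelder_path g T f \<longleftrightarrow> bdd_above (hoelder_sup T f) \<and> bdd_above (hoelder_quot g T f)"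

definition hoelder_norm :: "real \<Rightarrow> real \<Rightarrow> (real \<Rightarrow> 'a::real_normed_vector) \<Rightarrow> real" where
  "hoelder_norm g T f = Sup (hoelder_sup T f) + Sup (hoelder_quot g T f)"

text \<open>A in C^alpha_t C^{1+beta}_{V,W,loc}, with DA the Frechet derivative in x
  (valued in bounded linear operators), written out: the local (beta,R)-norms of the
  increments A_{s,t} and DA_{s,t} are bounded by C_R |t-s|^alpha.\<close>
definition field_hoelder_loc ::
  "real \<Rightarrow> real \<Rightarrow> real \<Rightarrow> (real \<Rightarrow> 'v::real_normed_vector \<Rightarrow> 'w::real_normed_vector)
     \<Rightarrow> (real \<Rightarrow> 'v \<Rightarrow> ('v \<Rightarrow>\<^sub>L 'w)) \<Rightarrow> bool" where
  "field_hoelder_loc T a b A DA \<longleftrightarrow>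
     (\<forall>x. A 0 x = 0) \<and>
     (\<forall>t\<in>{0..T}. \<forall>x. (A t has_derivative blinfun_apply (DA t x)) (at x)) \<and>
     (\<forall>R>0. \<exists>C. \<forall>s t. 0 \<le> s \<and> s < t \<and> t \<le> T \<longrightarrow>
        (\<forall>x y. norm x \<le> R \<and> norm y \<le> R \<and> x \<noteq> y \<longrightarrow>
            norm ((A t x - A s x) - (A t y - A s y)) \<le> C * (t - s) powr a * norm (x - y) powr b
          \<and> norm ((DA t x - DA s x) - (DA t y - DA s y)) \<le> C * (t - s) powr a * norm (x - y) powr b)
      \<and> (\<forall>x. norm x \<le> R \<longrightarrow>
            norm (A t x - A s x) \<le> C * (t - s) powr a
          \<and> norm (DA t x - DA s x) \<le> C * (t - s) powr a))"

definition is_partition :: "real \<Rightarrow> real list \<Rightarrow> bool" where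
  "is_partition t P \<longleftrightarrow> P \<noteq> [] \<and> hd P = 0 \<and> last P = t \<and> sorted_wrt (<) P"

definition mesh :: "real list \<Rightarrow> real" where
  "mesh P = Max (insert 0 ((\<lambda>i. P ! Suc i - P ! i) ` {..<length P - 1}))"

definition psum :: "(real \<Rightarrow> real \<Rightarrow> 'w::real_normed_vector) \<Rightarrow> real list \<Rightarrow> 'w" where
  "psum g P = (\<Sum>i<length P - 1. g (P ! i) (P ! Suc i))"

definition has_psum_integral :: "(real \<Rightarrow> real \<Rightarrow> 'w::real_normed_vector) \<Rightarrow> real \<Rightarrow> 'w \<Rightarrow> bool" where
  "has_psum_integral g t I \<longleftrightarrow>
     (\<forall>e>0. \<exists>d>0. \<forall>P. is_partition t P \<and> mesh P < d \<longrightarrow> norm (psum g P - I) < e)"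

definition psum_integral :: "(real \<Rightarrow> real \<Rightarrow> 'w::real_normed_vector) \<Rightarrow> real \<Rightarrow> 'w" where
  "psum_integral g t = (THE I. has_psum_integral g t I)"

definition nl_int :: "(real \<Rightarrow> 'v \<Rightarrow> 'w::real_normed_vector) \<Rightarrow> (real \<Rightarrow> 'v) \<Rightarrow> real \<Rightarrow> 'w" where
  "nl_int A x t = psum_integral (\<lambda>u v. A v (x u) - A u (x u)) t"

definition lin_int :: "(real \<Rightarrow> 'v::real_normed_vector \<Rightarrow> ('v \<Rightarrow>\<^sub>L 'w::real_normed_vector)) \<Rightarrow> (real \<Rightarrow> 'v)
     \<Rightarrow> (real \<Rightarrow> 'v) \<Rightarrow> real \<Rightarrow> 'w" where
  "lin_int DA x y t = psum_integral (\<lambda>u v. blinfun_apply (DA v (x u) - DA u (x u)) (y u)) t"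

end

theory Submission
  imports Defs
begin

definition nxt :: "real set \<Rightarrow> real \<Rightarrow> real" where
  "nxt S p = Min {q\<in>S. p < q}"

definition ssum :: "(real \<Rightarrow> real \<Rightarrow> 'w::real_normed_vector) \<Rightarrow> real set \<Rightarrow> 'w" where
  "ssum g S = (\<Sum>p\<in>{p\<in>S. p < Max S}. g p (nxt S p))"

definition spart :: "real set \<Rightarrow> real \<Rightarrow> real \<Rightarrow> bool" where
  "spart S a b \<longleftrightarrow> finite S \<and> S \<noteq> {} \<and> Min S = a \<and> Max S = b"

definition gaps :: "real set \<Rightarrow> real \<Rightarrow> bool" where
  "gaps S d \<longleftrightarrow> (\<forall>p\<in>S. p < Max S \<longrightarrow> nxt S p - p < d)"

lemma nxt_mem:
  assumes "finite S" "q \<in> S" "p < q"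
  shows "nxt S p \<in> S" "p < nxt S p" "nxt S p \<le> q"
proof -
  have ne: "{q\<in>S. p < q} \<noteq> {}" "finite {q\<in>S. p < q}" using assms by auto
  have "nxt S p \<in> {q\<in>S. p < q}" unfolding nxt_def using Min_in[OF ne(2) ne(1)] .
  then show "nxt S p \<in> S" "p < nxt S p" by auto
  show "nxt S p \<le> q" unfolding nxt_def using assms ne by (intro Min_le) auto
qed

lemma spart_sub: "spart S a b \<Longrightarrow> S \<subseteq> {a..b}"
  unfolding spart_def by auto

lemma spart_mem: "spart S a b \<Longrightarrow> a \<in> S \<and> b \<in> S"
  unfolding spart_def using Min_in Max_in by blast

lemma nxt_low:
  assumes "finite S" "u \<in> S" "p < u"
  shows "nxt (S \<inter> {..u}) p = nxt S p"
proof -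
  have a: "nxt S p \<in> S" "p < nxt S p" "nxt S p \<le> u" using nxt_mem[OF assms] by auto
  have b: "nxt (S \<inter> {..u}) p \<in> S \<inter> {..u}" "p < nxt (S \<inter> {..u}) p"
    using nxt_mem[of "S \<inter> {..u}" u p] assms by auto
  have "nxt (S \<inter> {..u}) p \<le> nxt S p" using nxt_mem(3)[of "S \<inter> {..u}" "nxt S p" p] a assms by auto
  moreover have "nxt S p \<le> nxt (S \<inter> {..u}) p" using nxt_mem(3)[of S "nxt (S \<inter> {..u}) p" p] b assms by auto
  ultimately show ?thesis by simp
qed

lemma nxt_high:
  assumes "finite S" "q \<in> S" "p < q" "u \<le> p"
  shows "nxt (S \<inter> {u..}) p = nxt S p"
proof -
  have a: "nxt S p \<in> S" "p < nxt S p" using nxt_mem[OF assms(1-3)] by auto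
  have b: "nxt (S \<inter> {u..}) p \<in> S \<inter> {u..}" "p < nxt (S \<inter> {u..}) p"
    using nxt_mem[of "S \<inter> {u..}" q p] assms by auto
  have "nxt (S \<inter> {u..}) p \<le> nxt S p" using nxt_mem(3)[of "S \<inter> {u..}" "nxt S p" p] a assms by auto
  moreover have "nxt S p \<le> nxt (S \<inter> {u..}) p" using nxt_mem(3)[of S "nxt (S \<inter> {u..}) p" p] b assms by auto
  ultimately show ?thesis by simp
qed

lemma ssum_split:
  assumes "finite S" "u \<in> S"
  shows "ssum g S = ssum g (S \<inter> {..u}) + ssum g (S \<inter> {u..})"
proof -
  have mS: "u \<le> Max S" using assms by (simp add: Max_ge)
  have mSS: "Max S \<in> S" using assms by (intro Max_in) auto
  have m1: "Max (S \<inter> {..u}) = u" using assms by (intro Max_eqI) auto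
  have m2: "Max (S \<inter> {u..}) = Max S" using assms mS mSS by (intro Max_eqI) auto
  have eq: "{p\<in>S. p < Max S} = {p\<in>S \<inter> {..u}. p < u} \<union> {p\<in>S \<inter> {u..}. p < Max S}"
    using mS by auto
  have "ssum g S = (\<Sum>p\<in>{p\<in>S \<inter> {..u}. p < u}. g p (nxt S p)) + (\<Sum>p\<in>{p\<in>S \<inter> {u..}. p < Max S}. g p (nxt S p))"
    unfolding ssum_def eq using assms by (intro sum.union_disjoint) auto
  also have "(\<Sum>p\<in>{p\<in>S \<inter> {..u}. p < u}. g p (nxt S p)) = ssum g (S \<inter> {..u})"
    unfolding ssum_def m1 using nxt_low[OF assms] by (intro sum.cong) auto
  also have "(\<Sum>p\<in>{p\<in>S \<inter> {u..}. p < Max S}. g p (nxt S p)) = ssum g (S \<inter> {u..})"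
    unfolding ssum_def m2
  proof (intro sum.cong refl)
    fix p assume p: "p \<in> {p\<in>S \<inter> {u..}. p < Max S}"
    then show "g p (nxt S p) = g p (nxt (S \<inter> {u..}) p)"
      using nxt_high[of S "Max S" p u] assms mSS by auto
  qed
  finally show ?thesis .
qed

lemma ssum_single: "ssum g {s} = 0"
proof -
  have "{p\<in>{s}. p < Max {s}} = {}" by auto
  then show ?thesis unfolding ssum_def by (simp only: sum.empty)
qed

lemma ssum_two: "s < t \<Longrightarrow> ssum g {s,t} = g s t"
proof -
  assume st: "s < t"
  have "Max {s,t} = t" using st by auto
  moreover have "{q\<in>{s,t}. s < q} = {t}" using st by auto
  moreover have "nxt {s,t} s = t" unfolding nxt_def using calculation by simp
  moreover have "{p\<in>{s,t}. p < t} = {s}" using st by auto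
  ultimately show ?thesis unfolding ssum_def by simp
qed

lemma ssum_diff: "ssum (\<lambda>p q. f p q - h p q) S = ssum f S - ssum h S"
  unfolding ssum_def by (simp add: sum_subtractf)
lemma ssum_add: "ssum (\<lambda>p q. f p q + h p q) S = ssum f S + ssum h S"
  unfolding ssum_def by (simp add: sum.distrib)
lemma ssum_scale: "ssum (\<lambda>p q. c *\<^sub>R f p q) S = c *\<^sub>R ssum f S"
  unfolding ssum_def by (simp add: scaleR_sum_right)
lemma ssum_mult: "ssum (\<lambda>p q. c * (f::real\<Rightarrow>real\<Rightarrow>real) p q) S = c * ssum f S"
  unfolding ssum_def by (rule sum_distrib_left[symmetric])


lemma ss_nth_le:
  fixes L :: "real list"
  assumes "sorted_wrt (<) L" "i \<le> j" "j < length L"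
  shows "L!i \<le> L!j"
proof (cases "i = j")
  case False
  then have "i < j" using assms by simp
  then have "L!i < L!j" using sorted_wrt_nth_less[OF assms(1), of i j] assms by simp
  then show ?thesis by simp
qed simp

lemma ss_nth_lt_iff:
  fixes L :: "real list"
  assumes "sorted_wrt (<) L" "i < length L" "j < length L"
  shows "L!i < L!j \<longleftrightarrow> i < j"
proof -
  consider "i<j" | "i=j" | "j<i" by linarith
  then show ?thesis
  proof cases
    case 1 then show ?thesis using sorted_wrt_nth_less[OF assms(1), of i j] assms by simp
  next
    case 2 then show ?thesis by simp
  next
    case 3
    then have "L!j < L!i" using sorted_wrt_nth_less[OF assms(1), of j i] assms by simp
    then show ?thesis using 3 by simp
  qed
qed

lemma ss_nxt:
  fixes L :: "real list"
  assumes "sorted_wrt (<) L" "Suc i < length L"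
  shows "nxt (set L) (L!i) = L!Suc i"
  unfolding nxt_def
proof (rule Min_eqI)
  show "finite {q \<in> set L. L ! i < q}" by auto
  show "L ! Suc i \<in> {q \<in> set L. L ! i < q}"
    using assms sorted_wrt_nth_less[OF assms(1), of i "Suc i"] by auto
  fix y assume "y \<in> {q \<in> set L. L ! i < q}"
  then obtain j where j: "j < length L" "y = L!j" "L!i < L!j" by (auto simp: in_set_conv_nth)
  then have "i < j" using ss_nth_lt_iff[OF assms(1)] assms by auto
  then show "L ! Suc i \<le> y" using j ss_nth_le[OF assms(1), of "Suc i" j] by auto
qed

lemma ss_max:
  fixes L :: "real list"
  assumes "sorted_wrt (<) L" "L \<noteq> []"
  shows "Max (set L) = last L" "Min (set L) = hd L"
proof -
  show "Max (set L) = last L"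
  proof (rule Max_eqI)
    fix y assume "y \<in> set L"
    then obtain j where "j < length L" "y = L!j" by (auto simp: in_set_conv_nth)
    then show "y \<le> last L" using ss_nth_le[OF assms(1), of j "length L - 1"] assms
      by (simp add: last_conv_nth)
  qed (use assms in auto)
  show "Min (set L) = hd L"
  proof (rule Min_eqI)
    fix y assume "y \<in> set L"
    then obtain j where "j < length L" "y = L!j" by (auto simp: in_set_conv_nth)
    then show "hd L \<le> y" using ss_nth_le[OF assms(1), of 0 j] assms
      by (simp add: hd_conv_nth)
  qed (use assms in auto)
qed

lemma ss_below_last:
  fixes L :: "real list"
  assumes "sorted_wrt (<) L" "L \<noteq> []"
  shows "{p\<in>set L. p < last L} = (\<lambda>i. L!i) ` {..<length L - 1}"
proof -
  have l: "last L = L!(length L - 1)" using assms by (simp add: last_conv_nth)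
  show ?thesis
  proof (intro set_eqI iffI)
    fix p assume "p \<in> {p\<in>set L. p < last L}"
    then obtain j where j: "j < length L" "p = L!j" "L!j < last L" by (auto simp: in_set_conv_nth)
    then have "j < length L - 1" using ss_nth_lt_iff[OF assms(1), of j "length L - 1"] l assms by auto
    then show "p \<in> (\<lambda>i. L!i) ` {..<length L - 1}" using j by auto
  next
    fix p assume "p \<in> (\<lambda>i. L!i) ` {..<length L - 1}"
    then obtain j where j: "j < length L - 1" "p = L!j" by auto
    then have "L!j < last L" using ss_nth_lt_iff[OF assms(1), of j "length L - 1"] l by auto
    then show "p \<in> {p\<in>set L. p < last L}" using j by auto
  qed
qed

lemma psum_ssum:
  fixes L :: "real list"
  assumes "sorted_wrt (<) L" "L \<noteq> []"
  shows "psum g L = ssum g (set L)"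
proof -
  have inj: "inj_on (\<lambda>i. L!i) {..<length L - 1}"
  proof (rule inj_onI)
    fix i j assume "i \<in> {..<length L - 1}" "j \<in> {..<length L - 1}" "L!i = L!j"
    then show "i = j" using ss_nth_lt_iff[OF assms(1), of i j] ss_nth_lt_iff[OF assms(1), of j i]
      by (metis lessThan_iff less_diff_conv linorder_neqE_nat order_less_irrefl add_lessD1)
  qed
  have "ssum g (set L) = (\<Sum>p\<in>(\<lambda>i. L!i) ` {..<length L - 1}. g p (nxt (set L) p))"
    unfolding ssum_def ss_max[OF assms] ss_below_last[OF assms] ..
  also have "\<dots> = (\<Sum>i<length L - 1. g (L!i) (nxt (set L) (L!i)))"
    by (subst sum.reindex[OF inj]) simp
  also have "\<dots> = psum g L" unfolding psum_def
    by (intro sum.cong refl) (simp add: ss_nxt[OF assms(1)])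
  finally show ?thesis ..
qed

lemma mesh_gaps:
  fixes L :: "real list"
  assumes "sorted_wrt (<) L" "L \<noteq> []" "d > 0"
  shows "mesh L < d \<longleftrightarrow> gaps (set L) d"
proof -
  have "mesh L < d \<longleftrightarrow> (\<forall>i<length L - 1. L!Suc i - L!i < d)"
    unfolding mesh_def using assms(3) by (subst Max_less_iff) auto
  also have "\<dots> \<longleftrightarrow> (\<forall>p\<in>(\<lambda>i. L!i) ` {..<length L - 1}. nxt (set L) p - p < d)"
    by (auto simp: ss_nxt[OF assms(1)])
  also have "\<dots> \<longleftrightarrow> gaps (set L) d"
    unfolding gaps_def ss_max[OF assms(1,2)] ss_below_last[OF assms(1,2), symmetric] by auto
  finally show ?thesis .
qed

lemma list_of_spart:
  assumes "spart S a b"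
  defines "L \<equiv> sorted_list_of_set S"
  shows "sorted_wrt (<) L" "L \<noteq> []" "set L = S" "hd L = a" "last L = b"
proof -
  have f: "finite S" "S \<noteq> {}" using assms unfolding spart_def by auto
  show s: "sorted_wrt (<) L" "L \<noteq> []" "set L = S" using f unfolding L_def
    by (auto simp: strict_sorted_list_of_set)
  show "hd L = a" "last L = b" using ss_max[OF s(1,2)] s(3) assms unfolding spart_def by auto
qed

lemma part_spart:
  assumes "is_partition t P"
  shows "spart (set P) 0 t" "sorted_wrt (<) P" "P \<noteq> []"
  using assms ss_max[of P] unfolding is_partition_def spart_def by auto

lemma hpi_set:
  "has_psum_integral g t I \<longleftrightarrow>
    (\<forall>e>0. \<exists>d>0. \<forall>S. spart S 0 t \<and> gaps S d \<longrightarrow> norm (ssum g S - I) < e)"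
proof
  assume h: "has_psum_integral g t I"
  show "\<forall>e>0. \<exists>d>0. \<forall>S. spart S 0 t \<and> gaps S d \<longrightarrow> norm (ssum g S - I) < e"
  proof (intro allI impI)
    fix e :: real assume "e > 0"
    then obtain d where d: "d > 0" "\<And>P. is_partition t P \<and> mesh P < d \<Longrightarrow> norm (psum g P - I) < e"
      using h unfolding has_psum_integral_def by blast
    show "\<exists>d>0. \<forall>S. spart S 0 t \<and> gaps S d \<longrightarrow> norm (ssum g S - I) < e"
    proof (intro exI[of _ d] conjI allI impI d(1))
      fix S assume S: "spart S 0 t \<and> gaps S d"
      note L = list_of_spart[OF S[THEN conjunct1]]
      let ?L = "sorted_list_of_set S"
      have "is_partition t ?L" unfolding is_partition_def using L by auto
      moreover have "mesh ?L < d" using mesh_gaps[OF L(1,2) d(1)] L(3) S by simp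
      ultimately have "norm (psum g ?L - I) < e" using d(2) by blast
      moreover have "psum g ?L = ssum g S" using psum_ssum[OF L(1,2), of g] L(3) by simp
      ultimately show "norm (ssum g S - I) < e" by simp
    qed
  qed
next
  assume h: "\<forall>e>0. \<exists>d>0. \<forall>S. spart S 0 t \<and> gaps S d \<longrightarrow> norm (ssum g S - I) < e"
  show "has_psum_integral g t I" unfolding has_psum_integral_def
  proof (intro allI impI)
    fix e :: real assume "e > 0"
    then obtain d where d: "d > 0" "\<And>S. spart S 0 t \<and> gaps S d \<Longrightarrow> norm (ssum g S - I) < e"
      using h by blast
    show "\<exists>d>0. \<forall>P. is_partition t P \<and> mesh P < d \<longrightarrow> norm (psum g P - I) < e"
    proof (intro exI[of _ d] conjI allI impI d(1))
      fix P assume P: "is_partition t P \<and> mesh P < d"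
      note Q = part_spart[OF P[THEN conjunct1]]
      have "gaps (set P) d" using mesh_gaps[OF Q(2,3) d(1)] P by simp
      then have "norm (ssum g (set P) - I) < e" using d(2) Q by blast
      then show "norm (psum g P - I) < e" using psum_ssum[OF Q(2,3), of g] by simp
    qed
  qed
qed


lemma spart_low:
  assumes "spart S s t" "u \<in> S"
  shows "spart (S \<inter> {..u}) s u"
proof -
  have f: "finite S" "S \<noteq> {}" "Min S = s" "Max S = t" using assms unfolding spart_def by auto
  have "s \<in> S" using spart_mem[OF assms(1)] by auto
  moreover have "s \<le> u" using f assms by auto
  ultimately show ?thesis unfolding spart_def using f assms
    by (auto intro!: Min_eqI Max_eqI)
qed

lemma spart_high:
  assumes "spart S s t" "u \<in> S"
  shows "spart (S \<inter> {u..}) u t"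
proof -
  have f: "finite S" "S \<noteq> {}" "Min S = s" "Max S = t" using assms unfolding spart_def by auto
  have "t \<in> S" using spart_mem[OF assms(1)] by auto
  moreover have "u \<le> t" using f assms by auto
  ultimately show ?thesis unfolding spart_def using f assms
    by (auto intro!: Min_eqI Max_eqI)
qed

lemma ssum_mono:
  fixes f h :: "real \<Rightarrow> real \<Rightarrow> real"
  assumes "\<And>p. p \<in> S \<Longrightarrow> p < Max S \<Longrightarrow> f p (nxt S p) \<le> h p (nxt S p)"
  shows "ssum f S \<le> ssum h S"
  unfolding ssum_def using assms by (intro sum_mono) auto

lemma ssum_telescope:
  assumes "spart S s t"
  shows "ssum (\<lambda>p q. q - p) S = t - s"
proof -
  note L = list_of_spart[OF assms]
  let ?L = "sorted_list_of_set S"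
  have "ssum (\<lambda>p q. q - p) S = psum (\<lambda>p q. q - p) ?L"
    using psum_ssum[OF L(1,2), of "\<lambda>p q. q - p"] L(3) by simp
  also have "\<dots> = ?L ! (length ?L - 1) - ?L ! 0"
    unfolding psum_def by (rule sum_lessThan_telescope[where f = "\<lambda>i. ?L ! i"])
  also have "\<dots> = t - s" using L by (simp add: last_conv_nth hd_conv_nth)
  finally show ?thesis .
qed

lemma gapsum:
  assumes "spart S s t" "gaps S d" "\<theta> \<ge> 1" "d > 0"
  shows "ssum (\<lambda>p q. (q - p) powr \<theta>) S \<le> d powr (\<theta> - 1) * (t - s)"
proof -
  have fin: "finite S" using assms unfolding spart_def by auto
  have "ssum (\<lambda>p q. (q - p) powr \<theta>) S \<le> ssum (\<lambda>p q. d powr (\<theta> - 1) * (q - p)) S"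
  proof (rule ssum_mono)
    fix p assume p: "p \<in> S" "p < Max S"
    have "Max S \<in> S" using spart_mem[OF assms(1)] assms(1) unfolding spart_def by auto
    then have "p < nxt S p" using nxt_mem[OF fin _ p(2)] by auto
    moreover have "nxt S p - p < d" using assms(2) p unfolding gaps_def by auto
    ultimately have h: "0 < nxt S p - p" "nxt S p - p \<le> d" by auto
    have "(nxt S p - p) powr \<theta> = (nxt S p - p) powr (\<theta> - 1) * (nxt S p - p)"
      using h by (simp add: powr_diff)
    also have "\<dots> \<le> d powr (\<theta> - 1) * (nxt S p - p)"
      using h assms(3) by (intro mult_right_mono powr_mono2) auto
    finally show "(nxt S p - p) powr \<theta> \<le> d powr (\<theta> - 1) * (nxt S p - p)" .
  qed
  also have "\<dots> = d powr (\<theta> - 1) * (t - s)"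
    using ssum_mult[of "d powr (\<theta> - 1)" "\<lambda>p q. q - p" S] ssum_telescope[OF assms(1)] by simp
  finally show ?thesis .
qed

definition Kc :: "real \<Rightarrow> real" where "Kc \<theta> = 2 / (1 - 2 powr (1 - \<theta>))"

lemma Kc_props:
  assumes "\<theta> > 1"
  shows "Kc \<theta> > 0" "Kc \<theta> * 2 powr (1 - \<theta>) + 2 = Kc \<theta>"
proof -
  have "2 powr (1 - \<theta>) < 2 powr 0" using assms by (intro powr_less_mono) auto
  then have h: "2 powr (1 - \<theta>) < 1" by simp
  then show "Kc \<theta> > 0" unfolding Kc_def by simp
  have nz: "1 - 2 powr (1 - \<theta>) \<noteq> 0" using h by linarith
  show "Kc \<theta> * 2 powr (1 - \<theta>) + 2 = Kc \<theta>" unfolding Kc_def using nz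
    by (simp add: field_simps)
qed

lemma norm4:
  fixes a b c d :: "'a::real_normed_vector"
  shows "norm (a + b - c - d) \<le> norm a + norm b + norm c + norm d"
  using norm_triangle_ineq4[of "a+b-c" d] norm_triangle_ineq4[of "a+b" c] norm_triangle_ineq[of a b]
  by linarith

locale sew =
  fixes T \<theta> M :: real and Xi :: "real \<Rightarrow> real \<Rightarrow> 'w::banach"
  assumes T: "T > 0" and th: "\<theta> > 1" and M: "M \<ge> 0"
    and diag: "\<And>s. 0 \<le> s \<Longrightarrow> s \<le> T \<Longrightarrow> Xi s s = 0"
    and delta: "\<And>s u t. 0 \<le> s \<Longrightarrow> s \<le> u \<Longrightarrow> u \<le> t \<Longrightarrow> t \<le> T \<Longrightarrow>
        norm (Xi s t - Xi s u - Xi u t) \<le> M * (t - s) powr \<theta>"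
begin

lemma single:
  assumes "spart S s t" "0 \<le> s" "t \<le> T"
  shows "norm (ssum Xi S - Xi s t) \<le> Kc \<theta> * M * (t - s) powr \<theta>"
  using assms
proof (induction "card S" arbitrary: S s t rule: less_induct)
  case less
  have fin: "finite S" "S \<noteq> {}" "Min S = s" "Max S = t" using less.prems unfolding spart_def by auto
  have st: "s \<in> S" "t \<in> S" using spart_mem[OF less.prems(1)] by auto
  have sub: "S \<subseteq> {s..t}" using spart_sub[OF less.prems(1)] .
  have K0: "Kc \<theta> > 0" using Kc_props th by auto
  show ?case
  proof (cases "s = t")
    case True
    then have "S = {s}" using sub st by auto
    then show ?thesis using diag less.prems True K0 M by (simp add: ssum_single)
  next
    case False
    then have slt: "s < t" using sub st by auto
    define m where "m = (s + t) / 2"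
    define A where "A = {p\<in>S. p \<le> m}"
    define u where "u = Max A"
    define v where "v = nxt S u"
    have Afin: "finite A" "A \<noteq> {}" using fin st slt unfolding A_def m_def by auto
    have uA: "u \<in> A" unfolding u_def using Afin by (rule Max_in)
    then have uS: "u \<in> S" and um: "u \<le> m" unfolding A_def by auto
    have su: "s \<le> u" using st(1) Afin slt unfolding u_def A_def m_def by (intro Max_ge) auto
    have ut: "u < t" using um slt unfolding m_def by auto
    have vS: "v \<in> S" and uv: "u < v" and vt: "v \<le> t" using nxt_mem[OF fin(1) st(2) ut] unfolding v_def by auto
    have vm: "m < v"
    proof (rule ccontr)
      assume "\<not> m < v"
      then have "v \<in> A" using vS unfolding A_def by auto
      then have "v \<le> u" unfolding u_def using Afin by (intro Max_ge) auto
      then show False using uv by auto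
    qed
    have between: "\<And>q. q \<in> S \<Longrightarrow> u < q \<Longrightarrow> v \<le> q" using nxt_mem(3)[OF fin(1)] unfolding v_def by auto
    define S1 where "S1 = S \<inter> {..u}"
    define S2 where "S2 = S \<inter> {v..}"
    have p1: "spart S1 s u" unfolding S1_def by (rule spart_low[OF less.prems(1) uS])
    have p2: "spart S2 v t" unfolding S2_def by (rule spart_high[OF less.prems(1) vS])
    have "t \<notin> S1" unfolding S1_def using ut by auto
    then have "S1 \<subset> S" unfolding S1_def using st by blast
    then have c1: "card S1 < card S" using psubset_card_mono[OF fin(1)] by blast
    have "s \<notin> S2" unfolding S2_def using su uv by auto
    then have "S2 \<subset> S" unfolding S2_def using st by blast
    then have c2: "card S2 < card S" using psubset_card_mono[OF fin(1)] by blast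
    have IH1: "norm (ssum Xi S1 - Xi s u) \<le> Kc \<theta> * M * (u - s) powr \<theta>"
      using less.hyps[OF c1 p1] less.prems su ut by auto
    have IH2: "norm (ssum Xi S2 - Xi v t) \<le> Kc \<theta> * M * (t - v) powr \<theta>"
      using less.hyps[OF c2 p2] less.prems su uv by auto
    have mid: "S \<inter> {u..} \<inter> {..v} = {u, v}" using uS vS uv between by force
    have hi: "S \<inter> {u..} \<inter> {v..} = S2" unfolding S2_def using uv by auto
    have "ssum Xi S = ssum Xi S1 + ssum Xi (S \<inter> {u..})"
      unfolding S1_def by (rule ssum_split[OF fin(1) uS])
    also have "ssum Xi (S \<inter> {u..}) = ssum Xi {u, v} + ssum Xi S2"
      using ssum_split[of "S \<inter> {u..}" v Xi] fin vS uv mid hi by auto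
    finally have dec: "ssum Xi S = ssum Xi S1 + Xi u v + ssum Xi S2" using ssum_two[OF uv] by simp
    have d1: "norm (Xi s t - Xi s v - Xi v t) \<le> M * (t - s) powr \<theta>"
      using delta[of s v t] less.prems su uv vt by auto
    have d2: "norm (Xi s v - Xi s u - Xi u v) \<le> M * (t - s) powr \<theta>"
    proof -
      have "norm (Xi s v - Xi s u - Xi u v) \<le> M * (v - s) powr \<theta>"
        using delta[of s u v] less.prems su uv vt by auto
      also have "\<dots> \<le> M * (t - s) powr \<theta>"
        using M su uv vt th by (intro mult_left_mono powr_mono2) auto
      finally show ?thesis .
    qed
    have eq: "ssum Xi S - Xi s t = (ssum Xi S1 - Xi s u) + (ssum Xi S2 - Xi v t)
        - (Xi s t - Xi s v - Xi v t) - (Xi s v - Xi s u - Xi u v)"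
      unfolding dec by (simp add: algebra_simps)
    define h where "h = t - s"
    have hp: "h > 0" unfolding h_def using slt by auto
    have P1: "(u - s) powr \<theta> \<le> (h/2) powr \<theta>" using su um th unfolding h_def m_def
      by (intro powr_mono2) auto
    have P2: "(t - v) powr \<theta> \<le> (h/2) powr \<theta>" using vt vm th unfolding h_def m_def
      by (intro powr_mono2) auto
    have P3: "(h/2) powr \<theta> = h powr \<theta> * 2 powr (1 - \<theta>) / 2"
      using hp by (simp add: powr_divide powr_diff)
    have "norm (ssum Xi S - Xi s t) \<le> norm (ssum Xi S1 - Xi s u) + norm (ssum Xi S2 - Xi v t)
        + norm (Xi s t - Xi s v - Xi v t) + norm (Xi s v - Xi s u - Xi u v)"
      unfolding eq by (rule norm4)
    also have "\<dots> \<le> Kc \<theta> * M * (h/2) powr \<theta> + Kc \<theta> * M * (h/2) powr \<theta> + M * h powr \<theta> + M * h powr \<theta>"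
    proof -
      have KM: "Kc \<theta> * M \<ge> 0" using K0 M by simp
      have "Kc \<theta> * M * (u - s) powr \<theta> \<le> Kc \<theta> * M * (h/2) powr \<theta>" by (rule mult_left_mono[OF P1 KM])
      moreover have "Kc \<theta> * M * (t - v) powr \<theta> \<le> Kc \<theta> * M * (h/2) powr \<theta>" by (rule mult_left_mono[OF P2 KM])
      ultimately show ?thesis using IH1 IH2 d1 d2 unfolding h_def by linarith
    qed
    also have "\<dots> = M * h powr \<theta> * (Kc \<theta> * 2 powr (1 - \<theta>) + 2)"
      unfolding P3 by (simp add: algebra_simps)
    also have "\<dots> = Kc \<theta> * M * (t - s) powr \<theta>" using Kc_props[OF th] unfolding h_def by simp
    finally show ?thesis .
  qed
qed

end


definition unif :: "real \<Rightarrow> real \<Rightarrow> nat \<Rightarrow> real set" where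
  "unif a b n = (\<lambda>k::nat. a + (b - a) * real k / real (Suc n)) ` {..Suc n}"

lemma unif_props:
  assumes "a \<le> b" "d > (b - a) / real (Suc n)"
  shows "spart (unif a b n) a b" "gaps (unif a b n) d"
proof -
  let ?f = "\<lambda>k::nat. a + (b - a) * real k / real (Suc n)"
  have fin: "finite (unif a b n)" "unif a b n \<noteq> {}" unfolding unif_def by auto
  have ge: "\<And>k. a \<le> ?f k" using assms(1) by simp
  have le: "\<And>k. k \<le> Suc n \<Longrightarrow> ?f k \<le> b"
  proof -
    fix k :: nat assume "k \<le> Suc n"
    then have "real k / real (Suc n) \<le> 1" by simp
    then have "(b - a) * (real k / real (Suc n)) \<le> (b - a) * 1" using assms(1) by (intro mult_left_mono) auto
    then show "?f k \<le> b" by simp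
  qed
  have mn: "Min (unif a b n) = a" unfolding unif_def
    by (rule Min_eqI) (use ge in \<open>auto intro!: image_eqI[of _ _ 0]\<close>)
  have mx: "Max (unif a b n) = b" unfolding unif_def
    by (rule Max_eqI) (use le in \<open>auto intro!: image_eqI[of _ _ "Suc n"]\<close>)
  show "spart (unif a b n) a b" unfolding spart_def using fin mn mx by auto
  show "gaps (unif a b n) d" unfolding gaps_def mx
  proof (intro ballI impI)
    fix p assume p: "p \<in> unif a b n" "p < b"
    then obtain k where k: "k \<le> Suc n" "p = ?f k" unfolding unif_def by auto
    have "k \<noteq> Suc n" using k p by auto
    then have kn: "Suc k \<le> Suc n" using k by auto
    have ab: "a < b" using p ge k by (metis not_le order.trans)
    have qS: "?f (Suc k) \<in> unif a b n" unfolding unif_def by (rule rev_image_eqI[of "Suc k"]) (use kn in auto)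
    have gap: "?f (Suc k) - p = (b - a) / real (Suc n)" using k by (simp add: field_simps)
    have "p < ?f (Suc k)" using gap ab by (simp add: field_simps)
    then have "nxt (unif a b n) p \<le> ?f (Suc k)" using nxt_mem(3)[OF fin(1) qS] by auto
    then show "nxt (unif a b n) p - p < d" using gap assms by linarith
  qed
qed

lemma exists_fine:
  assumes "a \<le> b" "d > 0"
  shows "\<exists>S. spart S a b \<and> gaps S d"
proof -
  obtain n :: nat where n: "(b - a) / d < real n" using reals_Archimedean2 by blast
  have "(b - a) / real (Suc n) < d"
  proof -
    have "b - a < d * real n" using n assms by (simp add: field_simps)
    also have "\<dots> \<le> d * real (Suc n)" using assms by simp
    finally show ?thesis by (simp add: field_simps)
  qed
  then show ?thesis using unif_props[OF assms(1)] by blast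
qed

lemma gaps_mono: "gaps S d \<Longrightarrow> d \<le> d' \<Longrightarrow> gaps S d'"
  unfolding gaps_def by force

lemma hpi_unique:
  assumes "has_psum_integral g t I" "has_psum_integral g t I'" "0 \<le> t"
  shows "I = I'"
proof -
  have "norm (I - I') < e" if e: "e > 0" for e
  proof -
    obtain d1 where d1: "d1 > 0" "\<And>S. spart S 0 t \<and> gaps S d1 \<Longrightarrow> norm (ssum g S - I) < e/2"
      using assms(1) e unfolding hpi_set by (meson half_gt_zero)
    obtain d2 where d2: "d2 > 0" "\<And>S. spart S 0 t \<and> gaps S d2 \<Longrightarrow> norm (ssum g S - I') < e/2"
      using assms(2) e unfolding hpi_set by (meson half_gt_zero)
    obtain S where S: "spart S 0 t" "gaps S (min d1 d2)" using exists_fine[OF assms(3), of "min d1 d2"] d1(1) d2(1) by auto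
    have "gaps S d1" "gaps S d2" using gaps_mono[OF S(2)] by auto
    then have "norm (ssum g S - I) < e/2" "norm (ssum g S - I') < e/2" using d1 d2 S by auto
    then show ?thesis using norm_triangle_ineq4[of "ssum g S - I'" "ssum g S - I"] by (simp add: norm_minus_commute)
  qed
  then have "norm (I - I') \<le> 0" by (metis less_irrefl not_le)
  then show ?thesis by simp
qed

lemma psum_integral_eq:
  assumes "has_psum_integral g t I" "0 \<le> t"
  shows "psum_integral g t = I"
  unfolding psum_integral_def using hpi_unique assms by blast

lemma hpi_zero: "has_psum_integral g 0 0"
  unfolding hpi_set
proof (intro allI impI exI[of _ 1] conjI)
  fix e :: real and S assume "e > 0" "spart S 0 0 \<and> gaps S 1"
  then have "S = {0}" using spart_sub[of S 0 0] spart_mem[of S 0 0] by auto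
  then show "norm (ssum g S - 0) < e" using \<open>e > 0\<close> by (simp add: ssum_single)
qed simp

lemma spart_union:
  assumes "spart S1 0 s" "spart S2 s t"
  shows "spart (S1 \<union> S2) 0 t" "ssum g (S1 \<union> S2) = ssum g S1 + ssum g S2"
    "gaps S1 d \<Longrightarrow> gaps S2 d \<Longrightarrow> gaps (S1 \<union> S2) d"
proof -
  have f1: "finite S1" "S1 \<noteq> {}" "Min S1 = 0" "Max S1 = s" using assms unfolding spart_def by auto
  have f2: "finite S2" "S2 \<noteq> {}" "Min S2 = s" "Max S2 = t" using assms unfolding spart_def by auto
  have sub1: "S1 \<subseteq> {0..s}" and sub2: "S2 \<subseteq> {s..t}" using spart_sub assms by auto
  have m1: "0 \<in> S1" "s \<in> S1" and m2: "s \<in> S2" "t \<in> S2" using spart_mem assms by auto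
  have st: "0 \<le> s" "s \<le> t" using sub1 sub2 m1 m2 by auto
  let ?S = "S1 \<union> S2"
  have fin: "finite ?S" using f1 f2 by auto
  have mn: "Min ?S = 0" using sub1 sub2 m1 st fin by (intro Min_eqI) auto
  have mx: "Max ?S = t" using sub1 sub2 m2 st fin by (intro Max_eqI) auto
  show "spart ?S 0 t" unfolding spart_def using fin mn mx f1(2) by blast
  have lo: "?S \<inter> {..s} = S1" using sub1 sub2 m1 m2 by auto
  have hi: "?S \<inter> {s..} = S2" using sub1 sub2 m1 m2 by auto
  show "ssum g ?S = ssum g S1 + ssum g S2" using ssum_split[OF fin, of s g] m1 lo hi by simp
  assume g1: "gaps S1 d" and g2: "gaps S2 d"
  show "gaps ?S d" unfolding gaps_def mx
  proof (intro ballI impI)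
    fix p assume p: "p \<in> ?S" "p < t"
    show "nxt ?S p - p < d"
    proof (cases "p < s")
      case True
      then have "p \<in> S1" using p sub2 by auto
      moreover have "nxt ?S p = nxt S1 p" using nxt_low[OF fin _ True] m1 lo by simp
      ultimately show ?thesis using g1 True f1 unfolding gaps_def by auto
    next
      case False
      then have "p \<in> S2" using p sub1 m2 by auto
      moreover have "nxt ?S p = nxt S2 p" using nxt_high[OF fin _ p(2), of s] m2 False hi by simp
      ultimately show ?thesis using g2 p f2 unfolding gaps_def by auto
    qed
  qed
qed

context sew
begin

lemma refine:
  assumes "spart S s t" "spart S' s t" "S \<subseteq> S'" "0 \<le> s" "t \<le> T"
  shows "norm (ssum Xi S' - ssum Xi S) \<le> ssum (\<lambda>p q. Kc \<theta> * M * (q - p) powr \<theta>) S"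
  using assms
proof (induction "card S" arbitrary: S S' s t rule: less_induct)
  case less
  have fin: "finite S" "S \<noteq> {}" "Min S = s" "Max S = t" using less.prems unfolding spart_def by auto
  have fin': "finite S'" using less.prems unfolding spart_def by auto
  have st: "s \<in> S" "t \<in> S" using spart_mem[OF less.prems(1)] by auto
  have sub: "S \<subseteq> {s..t}" using spart_sub[OF less.prems(1)] .
  have sub': "S' \<subseteq> {s..t}" using spart_sub[OF less.prems(2)] .
  show ?case
  proof (cases "\<exists>u\<in>S. s < u \<and> u < t")
    case True
    then obtain u where u: "u \<in> S" "s < u" "u < t" by auto
    have uS': "u \<in> S'" using u less.prems(3) by auto
    have "t \<notin> S \<inter> {..u}" using u by auto
    then have "S \<inter> {..u} \<subset> S" using st by blast
    then have c1: "card (S \<inter> {..u}) < card S" using psubset_card_mono[OF fin(1)] by blast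
    have "s \<notin> S \<inter> {u..}" using u by auto
    then have "S \<inter> {u..} \<subset> S" using st by blast
    then have c2: "card (S \<inter> {u..}) < card S" using psubset_card_mono[OF fin(1)] by blast
    have IH1: "norm (ssum Xi (S' \<inter> {..u}) - ssum Xi (S \<inter> {..u}))
        \<le> ssum (\<lambda>p q. Kc \<theta> * M * (q - p) powr \<theta>) (S \<inter> {..u})"
      using less.hyps[OF c1 spart_low[OF less.prems(1) u(1)] spart_low[OF less.prems(2) uS']]
        less.prems u by auto
    have IH2: "norm (ssum Xi (S' \<inter> {u..}) - ssum Xi (S \<inter> {u..}))
        \<le> ssum (\<lambda>p q. Kc \<theta> * M * (q - p) powr \<theta>) (S \<inter> {u..})"
      using less.hyps[OF c2 spart_high[OF less.prems(1) u(1)] spart_high[OF less.prems(2) uS']]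
        less.prems u by auto
    have e1: "ssum Xi S' = ssum Xi (S' \<inter> {..u}) + ssum Xi (S' \<inter> {u..})" by (rule ssum_split[OF fin' uS'])
    have e2: "ssum Xi S = ssum Xi (S \<inter> {..u}) + ssum Xi (S \<inter> {u..})" by (rule ssum_split[OF fin(1) u(1)])
    have e3: "ssum (\<lambda>p q. Kc \<theta> * M * (q - p) powr \<theta>) S = ssum (\<lambda>p q. Kc \<theta> * M * (q - p) powr \<theta>) (S \<inter> {..u})
       + ssum (\<lambda>p q. Kc \<theta> * M * (q - p) powr \<theta>) (S \<inter> {u..})" by (rule ssum_split[OF fin(1) u(1)])
    have "ssum Xi S' - ssum Xi S = (ssum Xi (S' \<inter> {..u}) - ssum Xi (S \<inter> {..u})) + (ssum Xi (S' \<inter> {u..}) - ssum Xi (S \<inter> {u..}))"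
      unfolding e1 e2 by (simp add: algebra_simps)
    then have "norm (ssum Xi S' - ssum Xi S) \<le> norm (ssum Xi (S' \<inter> {..u}) - ssum Xi (S \<inter> {..u})) + norm (ssum Xi (S' \<inter> {u..}) - ssum Xi (S \<inter> {u..}))"
      by (simp add: norm_triangle_ineq)
    then show ?thesis unfolding e3 using IH1 IH2 by linarith
  next
    case False
    show ?thesis
    proof (cases "s = t")
      case True
      then have "S = {s}" "S' = {s}" using sub sub' st less.prems(3) by auto
      then show ?thesis by (simp add: ssum_single)
    next
      case ne: False
      then have slt: "s < t" using sub st by auto
      have "S \<subseteq> {s, t}"
      proof
        fix x assume x: "x \<in> S"
        then have "s \<le> x" "x \<le> t" using sub by auto
        moreover have "\<not> (s < x \<and> x < t)" using False x by blast
        ultimately show "x \<in> {s, t}" by auto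
      qed
      then have "S = {s, t}" using st by blast
      then have "ssum Xi S = Xi s t" "ssum (\<lambda>p q. Kc \<theta> * M * (q - p) powr \<theta>) S = Kc \<theta> * M * (t - s) powr \<theta>"
        using ssum_two[OF slt] by auto
      then show ?thesis using single[OF less.prems(2) less.prems(4,5)] by simp
    qed
  qed
qed

lemma cauchy_bound:
  assumes "spart S 0 t" "spart S' 0 t" "t \<le> T" "gaps S d" "gaps S' d" "d > 0"
  shows "norm (ssum Xi S - ssum Xi S') \<le> 2 * (Kc \<theta> * M * d powr (\<theta> - 1) * t)"
proof -
  let ?U = "S \<union> S'"
  have f: "finite S" "S \<noteq> {}" "Min S = 0" "Max S = t" using assms unfolding spart_def by auto
  have f': "finite S'" "S' \<noteq> {}" "Min S' = 0" "Max S' = t" using assms unfolding spart_def by auto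
  have U: "spart ?U 0 t" unfolding spart_def using f f' by (simp add: Min_Un Max_Un)
  have KM: "Kc \<theta> * M \<ge> 0" using Kc_props[OF th] M by simp
  have b: "ssum (\<lambda>p q. Kc \<theta> * M * (q - p) powr \<theta>) R \<le> Kc \<theta> * M * d powr (\<theta> - 1) * t"
    if "spart R 0 t" "gaps R d" for R
  proof -
    have "ssum (\<lambda>p q. Kc \<theta> * M * (q - p) powr \<theta>) R = Kc \<theta> * M * ssum (\<lambda>p q. (q - p) powr \<theta>) R"
      by (rule ssum_mult)
    also have "\<dots> \<le> Kc \<theta> * M * (d powr (\<theta> - 1) * (t - 0))"
      using gapsum[OF that, of \<theta>] th assms(6) KM by (intro mult_left_mono) auto
    finally show ?thesis by simp
  qed
  have r1: "norm (ssum Xi ?U - ssum Xi S) \<le> Kc \<theta> * M * d powr (\<theta> - 1) * t"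
    using refine[OF assms(1) U _ _ assms(3)] b[OF assms(1,4)] by auto
  have r2: "norm (ssum Xi ?U - ssum Xi S') \<le> Kc \<theta> * M * d powr (\<theta> - 1) * t"
    using refine[OF assms(2) U _ _ assms(3)] b[OF assms(2,5)] by auto
  show ?thesis using norm_triangle_ineq4[of "ssum Xi ?U - ssum Xi S'" "ssum Xi ?U - ssum Xi S"] r1 r2
    by (simp add: norm_minus_commute)
qed

lemma small_d:
  assumes "e > 0" "t \<ge> 0"
  shows "\<exists>d>0. 2 * (Kc \<theta> * M * d powr (\<theta> - 1) * t) < e"
proof -
  define c where "c = 2 * Kc \<theta> * M * t"
  have c: "c \<ge> 0" unfolding c_def using Kc_props[OF th] M assms by simp
  define d where "d = (e / (c + 1)) powr (1 / (\<theta> - 1))"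
  have pos: "e / (c + 1) > 0" using c assms by simp
  have d: "d > 0" unfolding d_def using pos c assms by auto
  have "d powr (\<theta> - 1) = (e / (c + 1)) powr ((1 / (\<theta> - 1)) * (\<theta> - 1))" unfolding d_def by (simp add: powr_powr)
  also have "\<dots> = (e / (c + 1)) powr 1" using th by simp
  also have "\<dots> = e / (c + 1)" using pos by (simp only: powr_one_gt_zero_iff)
  finally have "d powr (\<theta> - 1) = e / (c + 1)" .
  then have "2 * (Kc \<theta> * M * d powr (\<theta> - 1) * t) = c * (e / (c + 1))" unfolding c_def by simp
  also have "\<dots> < e" using c assms by (simp add: field_simps)
  finally show ?thesis using d by blast
qed

lemma exists_int:
  assumes "0 \<le> t" "t \<le> T"
  shows "\<exists>I. has_psum_integral Xi t I"
proof -
  define X where "X n = ssum Xi (unif 0 t n)" for n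
  have fineN: "\<exists>N. \<forall>n\<ge>N. spart (unif 0 t n) 0 t \<and> gaps (unif 0 t n) d" if "d > 0" for d
  proof -
    obtain N :: nat where N: "t / d < real N" using reals_Archimedean2 by blast
    have "spart (unif 0 t n) 0 t \<and> gaps (unif 0 t n) d" if "n \<ge> N" for n
    proof -
      have "t < d * real N" using N \<open>d > 0\<close> by (simp add: field_simps)
      also have "\<dots> \<le> d * real (Suc n)" using \<open>d > 0\<close> that by simp
      finally have "(t - 0) / real (Suc n) < d" by (simp add: field_simps)
      then show ?thesis using unif_props[OF assms(1)] by blast
    qed
    then show ?thesis by blast
  qed
  have "Cauchy X"
  proof (rule CauchyI)
    fix e :: real assume "e > 0"
    then obtain d where d: "d > 0" "2 * (Kc \<theta> * M * d powr (\<theta> - 1) * t) < e" using small_d assms by blast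
    then obtain N where N: "\<And>n. n \<ge> N \<Longrightarrow> spart (unif 0 t n) 0 t \<and> gaps (unif 0 t n) d" using fineN by blast
    show "\<exists>N. \<forall>m\<ge>N. \<forall>n\<ge>N. norm (X m - X n) < e"
    proof (intro exI allI impI)
      fix m n assume "N \<le> m" "N \<le> n"
      then have "spart (unif 0 t m) 0 t" "gaps (unif 0 t m) d" "spart (unif 0 t n) 0 t" "gaps (unif 0 t n) d"
        using N by auto
      then have "norm (X m - X n) \<le> 2 * (Kc \<theta> * M * d powr (\<theta> - 1) * t)" unfolding X_def
        using cauchy_bound[of "unif 0 t m" t "unif 0 t n" d] assms d(1) by blast
      then show "norm (X m - X n) < e" using d(2) by linarith
    qed
  qed
  then obtain L where L: "X \<longlonglongrightarrow> L" using Cauchy_convergent_iff convergent_def by blast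
  have "has_psum_integral Xi t L"
    unfolding hpi_set
  proof (intro allI impI)
    fix e :: real assume e: "e > 0"
    then obtain d where d: "d > 0" "2 * (Kc \<theta> * M * d powr (\<theta> - 1) * t) < e/2"
      using small_d[of "e/2"] assms by auto
    then obtain N where N: "\<And>n. n \<ge> N \<Longrightarrow> spart (unif 0 t n) 0 t \<and> gaps (unif 0 t n) d" using fineN by blast
    obtain n0 where n0: "\<And>n. n \<ge> n0 \<Longrightarrow> norm (X n - L) < e/2" using L e unfolding LIMSEQ_iff by (meson half_gt_zero)
    show "\<exists>d>0. \<forall>S. spart S 0 t \<and> gaps S d \<longrightarrow> norm (ssum Xi S - L) < e"
    proof (intro exI[of _ d] conjI allI impI d(1))
      fix S assume S: "spart S 0 t \<and> gaps S d"
      let ?n = "max N n0"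
      have "spart (unif 0 t ?n) 0 t" "gaps (unif 0 t ?n) d" using N[of ?n] by auto
      then have "norm (ssum Xi S - X ?n) \<le> 2 * (Kc \<theta> * M * d powr (\<theta> - 1) * t)" unfolding X_def
        using cauchy_bound[of S t "unif 0 t ?n" d] S assms d(1) by blast
      then have "norm (ssum Xi S - X ?n) < e/2" using d(2) by linarith
      moreover have "norm (X ?n - L) < e/2" using n0 by simp
      ultimately show "norm (ssum Xi S - L) < e"
        using norm_triangle_ineq[of "ssum Xi S - X ?n" "X ?n - L"] by simp
    qed
  qed
  then show ?thesis by blast
qed

lemma incr:
  assumes "0 \<le> s" "s \<le> t" "t \<le> T"
  shows "norm (psum_integral Xi t - psum_integral Xi s - Xi s t) \<le> Kc \<theta> * M * (t - s) powr \<theta>"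
proof -
  obtain Is where Is: "has_psum_integral Xi s Is" using exists_int[of s] exists_int[of t] assms by auto
  obtain It where It: "has_psum_integral Xi t It" using exists_int[of s] exists_int[of t] assms by auto
  have js: "psum_integral Xi s = Is" using psum_integral_eq[OF Is] assms by simp
  have jt: "psum_integral Xi t = It" using psum_integral_eq[OF It] assms by simp
  have "norm (It - Is - Xi s t) \<le> Kc \<theta> * M * (t - s) powr \<theta> + e" if e: "e > 0" for e
  proof -
    obtain d1 where d1: "d1 > 0" "\<And>S. spart S 0 s \<and> gaps S d1 \<Longrightarrow> norm (ssum Xi S - Is) < e/2"
      using Is e unfolding hpi_set by (meson half_gt_zero)
    obtain d2 where d2: "d2 > 0" "\<And>S. spart S 0 t \<and> gaps S d2 \<Longrightarrow> norm (ssum Xi S - It) < e/2"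
      using It e unfolding hpi_set by (meson half_gt_zero)
    define d where "d = min d1 d2"
    have d: "d > 0" unfolding d_def using d1 d2 by simp
    obtain S1 where S1: "spart S1 0 s" "gaps S1 d" using exists_fine[OF assms(1) d] by blast
    obtain S2 where S2: "spart S2 s t" "gaps S2 d" using exists_fine[OF assms(2) d] by blast
    note U = spart_union[OF S1(1) S2(1)]
    have gU: "gaps (S1 \<union> S2) d" using U(3) S1 S2 by blast
    have "gaps S1 d1" "gaps (S1 \<union> S2) d2" using gaps_mono[OF S1(2)] gaps_mono[OF gU] unfolding d_def by auto
    then have a1: "norm (ssum Xi S1 - Is) < e/2" and a2: "norm (ssum Xi (S1 \<union> S2) - It) < e/2"
      using d1 d2 S1 U(1) by auto
    have a3: "norm (ssum Xi S2 - Xi s t) \<le> Kc \<theta> * M * (t - s) powr \<theta>"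
      by (rule single[OF S2(1) assms(1,3)])
    have eqn: "It - Is - Xi s t = (ssum Xi S2 - Xi s t) - (ssum Xi (S1 \<union> S2) - It) + (ssum Xi S1 - Is)"
      unfolding U(2) by (simp add: algebra_simps)
    have "norm (It - Is - Xi s t) \<le> norm (ssum Xi S2 - Xi s t) + norm (ssum Xi (S1 \<union> S2) - It) + norm (ssum Xi S1 - Is)"
      unfolding eqn using norm_triangle_ineq4[of "ssum Xi S2 - Xi s t" "ssum Xi (S1 \<union> S2) - It"]
        norm_triangle_ineq[of "(ssum Xi S2 - Xi s t) - (ssum Xi (S1 \<union> S2) - It)" "ssum Xi S1 - Is"]
      by linarith
    then show ?thesis using a1 a2 a3 by linarith
  qed
  then show ?thesis unfolding js jt by (rule field_le_epsilon)
qed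

end


lemma hoelder_intro:
  fixes f :: "real \<Rightarrow> 'a::real_normed_vector"
  assumes T: "T > 0" and b1: "\<And>t. 0 \<le> t \<Longrightarrow> t \<le> T \<Longrightarrow> norm (f t) \<le> K1"
    and b2: "\<And>s t. 0 \<le> s \<Longrightarrow> s < t \<Longrightarrow> t \<le> T \<Longrightarrow> norm (f t - f s) \<le> K2 * (t - s) powr a"
  shows "hoelder_path a T f" "hoelder_norm a T f \<le> K1 + K2"
proof -
  have q: "x \<le> K2" if "x \<in> hoelder_quot a T f" for x
  proof -
    have "x \<in> (\<lambda>(s,t). norm (f t - f s) / (t - s) powr a) ` {(s,t). 0 \<le> s \<and> s < t \<and> t \<le> T}"
      using that unfolding hoelder_quot_def .
    then obtain z where z: "x = (\<lambda>(s,t). norm (f t - f s) / (t - s) powr a) z" "z \<in> {(s,t). 0 \<le> s \<and> s < t \<and> t \<le> T}"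
      by (rule imageE)
    obtain s t where "z = (s, t)" by (cases z)
    then have st: "0 \<le> s" "s < t" "t \<le> T" "x = norm (f t - f s) / (t - s) powr a" using z by auto
    have "(t - s) powr a > 0" using st by simp
    then show ?thesis using b2[OF st(1-3)] st(4) by (simp add: divide_le_eq)
  qed
  have p: "x \<le> K1" if "x \<in> hoelder_sup T f" for x
    using that b1 unfolding hoelder_sup_def by (auto simp del: norm_ge_zero)
  have ne1: "hoelder_sup T f \<noteq> {}" unfolding hoelder_sup_def using T by auto
  have "(0, T) \<in> {(s,t). 0 \<le> s \<and> s < t \<and> t \<le> T}" using T by simp
  then have ne2: "hoelder_quot a T f \<noteq> {}" unfolding hoelder_quot_def by blast
  have "bdd_above (hoelder_sup T f)" by (rule bdd_aboveI[of _ K1]) (rule p)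
  moreover have "bdd_above (hoelder_quot a T f)" by (rule bdd_aboveI[of _ K2]) (rule q)
  ultimately show "hoelder_path a T f" unfolding hoelder_path_def by simp
  have "Sup (hoelder_sup T f) \<le> K1" using ne1 p by (rule cSup_least)
  moreover have "Sup (hoelder_quot a T f) \<le> K2" using ne2 q by (rule cSup_least)
  ultimately show "hoelder_norm a T f \<le> K1 + K2" unfolding hoelder_norm_def by simp
qed

lemma hoelder_cong:
  assumes "\<And>t. 0 \<le> t \<Longrightarrow> t \<le> T \<Longrightarrow> f t = h t"
  shows "hoelder_sup T f = hoelder_sup T h" "hoelder_quot a T f = hoelder_quot a T h"
    "hoelder_norm a T f = hoelder_norm a T h" "hoelder_path a T f = hoelder_path a T h"
proof -
  show 1: "hoelder_sup T f = hoelder_sup T h" unfolding hoelder_sup_def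
    using assms by (intro image_cong) auto
  show 2: "hoelder_quot a T f = hoelder_quot a T h" unfolding hoelder_quot_def
    using assms by (intro image_cong) auto
  show "hoelder_norm a T f = hoelder_norm a T h" unfolding hoelder_norm_def 1 2 ..
  show "hoelder_path a T f = hoelder_path a T h" unfolding hoelder_path_def 1 2 ..
qed

lemma hoelder_bounds:
  fixes f :: "real \<Rightarrow> 'a::real_normed_vector"
  assumes "hoelder_path g T f" "T > 0"
  shows "\<And>t. 0 \<le> t \<Longrightarrow> t \<le> T \<Longrightarrow> norm (f t) \<le> Sup (hoelder_sup T f)"
    "\<And>s t. 0 \<le> s \<Longrightarrow> s \<le> t \<Longrightarrow> t \<le> T \<Longrightarrow> norm (f t - f s) \<le> Sup (hoelder_quot g T f) * (t - s) powr g"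
    "Sup (hoelder_sup T f) \<ge> 0" "Sup (hoelder_quot g T f) \<ge> 0"
    "\<And>t. 0 \<le> t \<Longrightarrow> t \<le> T \<Longrightarrow> norm (f t) \<le> hoelder_norm g T f"
    "\<And>s t. 0 \<le> s \<Longrightarrow> s \<le> t \<Longrightarrow> t \<le> T \<Longrightarrow> norm (f t - f s) \<le> hoelder_norm g T f * (t - s) powr g"
    "hoelder_norm g T f \<ge> 0"
proof -
  have bd: "bdd_above (hoelder_sup T f)" "bdd_above (hoelder_quot g T f)"
    using assms unfolding hoelder_path_def by auto
  show sp: "norm (f t) \<le> Sup (hoelder_sup T f)" if "0 \<le> t" "t \<le> T" for t
    using that bd(1) unfolding hoelder_sup_def by (intro cSup_upper) auto
  have qp: "norm (f t - f s) / (t - s) powr g \<le> Sup (hoelder_quot g T f)" if "0 \<le> s" "s < t" "t \<le> T" for s t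
    using that bd(2) unfolding hoelder_quot_def by (intro cSup_upper) auto
  show s0: "Sup (hoelder_sup T f) \<ge> 0"
  proof -
    have "norm (f 0) \<le> Sup (hoelder_sup T f)" using sp[of 0] assms(2) by simp
    then show ?thesis using norm_ge_zero[of "f 0"] by linarith
  qed
  show q0: "Sup (hoelder_quot g T f) \<ge> 0"
  proof -
    have "norm (f T - f 0) / (T - 0) powr g \<le> Sup (hoelder_quot g T f)" using qp[of 0 T] assms(2) by simp
    moreover have "0 \<le> norm (f T - f 0) / (T - 0) powr g" by simp
    ultimately show ?thesis by linarith
  qed
  show qq: "norm (f t - f s) \<le> Sup (hoelder_quot g T f) * (t - s) powr g" if "0 \<le> s" "s \<le> t" "t \<le> T" for s t
  proof (cases "s = t")
    case True then show ?thesis using q0 by simp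
  next
    case False
    then have "s < t" "(t - s) powr g > 0" using that by auto
    then show ?thesis using qp[of s t] that by (simp add: divide_le_eq)
  qed
  show "hoelder_norm g T f \<ge> 0" unfolding hoelder_norm_def using s0 q0 by simp
  show "norm (f t) \<le> hoelder_norm g T f" if "0 \<le> t" "t \<le> T" for t
    unfolding hoelder_norm_def using sp[OF that] q0 by simp
  show "norm (f t - f s) \<le> hoelder_norm g T f * (t - s) powr g" if "0 \<le> s" "s \<le> t" "t \<le> T" for s t
  proof -
    have "Sup (hoelder_quot g T f) * (t - s) powr g \<le> hoelder_norm g T f * (t - s) powr g"
      unfolding hoelder_norm_def using s0 by (intro mult_right_mono) auto
    then show ?thesis using qq[OF that] by linarith
  qed
qed

lemma pow_T:
  fixes h T p q :: real
  assumes "0 \<le> h" "h \<le> T" "0 \<le> q" "q \<le> p"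
  shows "h powr p \<le> T powr (p - q) * h powr q"
proof (cases "h = 0")
  case True then show ?thesis using assms by simp
next
  case False
  then have hp: "h > 0" using assms by simp
  have "h powr p = h powr (p - q) * h powr q" using hp by (simp add: powr_add[symmetric])
  also have "\<dots> \<le> T powr (p - q) * h powr q"
    using assms hp by (intro mult_right_mono powr_mono2) auto
  finally show ?thesis .
qed

lemma sewing:
  fixes Xi :: "real \<Rightarrow> real \<Rightarrow> 'w::banach"
  assumes T: "T > 0" and th: "\<theta> > 1" and M: "M \<ge> 0" and B: "B \<ge> 0" and a: "0 < a" "a \<le> 1"
    and bnd: "\<And>s t. 0 \<le> s \<Longrightarrow> s \<le> t \<Longrightarrow> t \<le> T \<Longrightarrow> norm (Xi s t) \<le> B * (t - s) powr a"
    and delta: "\<And>s u t. 0 \<le> s \<Longrightarrow> s \<le> u \<Longrightarrow> u \<le> t \<Longrightarrow> t \<le> T \<Longrightarrow>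
        norm (Xi s t - Xi s u - Xi u t) \<le> M * (t - s) powr \<theta>"
  shows "\<forall>t\<in>{0..T}. has_psum_integral Xi t (psum_integral Xi t)"
    "hoelder_path a T (psum_integral Xi)"
    "hoelder_norm a T (psum_integral Xi) \<le> (1 + T powr a) * (1 + Kc \<theta> * T powr (\<theta> - a)) * (B + M)"
proof -
  have diag: "Xi s s = 0" if "0 \<le> s" "s \<le> T" for s using bnd[of s s] that by simp
  interpret sew T \<theta> M Xi using T th M diag delta by unfold_locales auto
  show "\<forall>t\<in>{0..T}. has_psum_integral Xi t (psum_integral Xi t)"
  proof
    fix t assume "t \<in> {0..T}"
    then obtain I where "has_psum_integral Xi t I" using exists_int by auto
    then show "has_psum_integral Xi t (psum_integral Xi t)" using psum_integral_eq \<open>t \<in> {0..T}\<close> by auto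
  qed
  have J0: "psum_integral Xi 0 = 0" using psum_integral_eq[OF hpi_zero] by simp
  define C0 where "C0 = B + Kc \<theta> * M * T powr (\<theta> - a)"
  have K0: "Kc \<theta> > 0" using Kc_props[OF th] by simp
  have inc: "norm (psum_integral Xi t - psum_integral Xi s) \<le> C0 * (t - s) powr a"
    if "0 \<le> s" "s \<le> t" "t \<le> T" for s t
  proof -
    have "norm (psum_integral Xi t - psum_integral Xi s) \<le> norm (psum_integral Xi t - psum_integral Xi s - Xi s t) + norm (Xi s t)"
      using norm_triangle_ineq[of "psum_integral Xi t - psum_integral Xi s - Xi s t" "Xi s t"] by simp
    also have "\<dots> \<le> Kc \<theta> * M * (t - s) powr \<theta> + B * (t - s) powr a"
      using incr[OF that] bnd[OF that] by (rule add_mono)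
    also have "Kc \<theta> * M * (t - s) powr \<theta> \<le> Kc \<theta> * M * (T powr (\<theta> - a) * (t - s) powr a)"
      using pow_T[of "t - s" T a \<theta>] that a th K0 M by (intro mult_left_mono) auto
    finally show ?thesis unfolding C0_def by (simp add: algebra_simps)
  qed
  have C0: "C0 \<ge> 0" unfolding C0_def using B K0 M by simp
  have b1: "norm (psum_integral Xi t) \<le> C0 * T powr a" if "0 \<le> t" "t \<le> T" for t
  proof -
    have "norm (psum_integral Xi t) \<le> C0 * (t - 0) powr a" using inc[of 0 t] that J0 by simp
    also have "\<dots> \<le> C0 * T powr a" using that C0 a by (intro mult_left_mono powr_mono2) auto
    finally show ?thesis .
  qed
  have b2: "norm (psum_integral Xi t - psum_integral Xi s) \<le> C0 * (t - s) powr a"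
    if "0 \<le> s" "s < t" "t \<le> T" for s t using inc that by auto
  note H = hoelder_intro[OF T b1 b2]
  show "hoelder_path a T (psum_integral Xi)" using H(1) .
  have "C0 * T powr a + C0 = (1 + T powr a) * C0" by (simp add: algebra_simps)
  also have "\<dots> \<le> (1 + T powr a) * ((1 + Kc \<theta> * T powr (\<theta> - a)) * (B + M))"
  proof (rule mult_left_mono)
    have "0 \<le> Kc \<theta> * T powr (\<theta> - a) * B" using K0 B by simp
    then show "C0 \<le> (1 + Kc \<theta> * T powr (\<theta> - a)) * (B + M)" unfolding C0_def
      using M by (simp add: algebra_simps)
  qed simp
  finally show "hoelder_norm a T (psum_integral Xi) \<le> (1 + T powr a) * (1 + Kc \<theta> * T powr (\<theta> - a)) * (B + M)"
    using H(2) by simp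
qed


lemma mvt_gen:
  fixes F :: "'v::real_normed_vector \<Rightarrow> 'w::real_normed_vector"
  assumes der: "\<And>w. w \<in> closed_segment x y \<Longrightarrow> (F has_derivative blinfun_apply (LF w)) (at w)"
    and bnd: "\<And>w. w \<in> closed_segment x y \<Longrightarrow> norm (LF w - L0) \<le> K"
  shows "norm (F y - F x - blinfun_apply L0 (y - x)) \<le> K * norm (y - x)"
proof -
  define h where "h w = F w - blinfun_apply L0 w" for w
  have dh: "(h has_derivative blinfun_apply (LF w - L0)) (at w within closed_segment x y)"
    if "w \<in> closed_segment x y" for w
  proof -
    have "(h has_derivative (\<lambda>v. blinfun_apply (LF w) v - blinfun_apply L0 v)) (at w)"
      unfolding h_def by (intro has_derivative_diff der[OF that] bounded_linear.has_derivative[OF blinfun.bounded_linear_right] has_derivative_ident)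
    moreover have "blinfun_apply (LF w - L0) = (\<lambda>v. blinfun_apply (LF w) v - blinfun_apply L0 v)"
      by (rule ext) (simp add: blinfun.diff_left)
    ultimately show ?thesis by (simp add: has_derivative_at_withinI)
  qed
  have "norm (h y - h x) \<le> K * norm (y - x)"
    by (rule differentiable_bound[OF convex_closed_segment dh])
       (auto simp: norm_blinfun.rep_eq[symmetric] intro: bnd)
  then show ?thesis unfolding h_def by (simp add: blinfun.diff_right algebra_simps)
qed

lemma der_shift:
  fixes f :: "'v::real_normed_vector \<Rightarrow> 'w::real_normed_vector"
  assumes "(f has_derivative D) (at (p + w))"
  shows "((\<lambda>w. f (p + w)) has_derivative D) (at w)"
proof -
  have "((\<lambda>w. p + w) has_derivative (\<lambda>h. h)) (at w)"
    using has_derivative_add[OF has_derivative_const[of p] has_derivative_ident] by simp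
  from has_derivative_compose[OF this assms] show ?thesis by simp
qed

lemma seg_ball:
  fixes x y w :: "'v::real_normed_vector"
  assumes "norm (p + x) \<le> R" "norm (p + y) \<le> R" "w \<in> closed_segment x y"
  shows "norm (p + w) \<le> R"
proof -
  have "p + w \<in> closed_segment (p + x) (p + y)" using assms(3) closed_segment_translation[of p x y] by auto
  moreover have "closed_segment (p + x) (p + y) \<subseteq> cball 0 R"
    using assms by (intro closed_segment_subset) auto
  ultimately show ?thesis by (meson mem_cball_0 subsetD)
qed

lemma seg_ball0:
  fixes x y w :: "'v::real_normed_vector"
  assumes "norm x \<le> R" "norm y \<le> R" "w \<in> closed_segment x y"
  shows "norm w \<le> R"
  using seg_ball[of 0 x R y w] assms by simp

locale Gloc =
  fixes f :: "'v::real_normed_vector \<Rightarrow> 'w::real_normed_vector" and L :: "'v \<Rightarrow> ('v \<Rightarrow>\<^sub>L 'w)"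
    and \<kappa> R b :: real
  assumes der: "\<And>z. (f has_derivative blinfun_apply (L z)) (at z)"
    and hol: "\<And>z z'. norm z \<le> R \<Longrightarrow> norm z' \<le> R \<Longrightarrow> norm (L z - L z') \<le> \<kappa> * norm (z - z') powr b"
    and kp: "\<kappa> \<ge> 0" and bp: "b > 0"
begin

definition G where "G p q = f (p + q) - f p - blinfun_apply (L p) q"

lemma G1:
  assumes "norm p \<le> R" "norm (p + q) \<le> R"
  shows "norm (G p q) \<le> \<kappa> * norm q powr b * norm q"
proof -
  have "norm (f (p + q) - f (p + 0) - blinfun_apply (L p) (q - 0)) \<le> (\<kappa> * norm q powr b) * norm (q - 0)"
  proof (rule mvt_gen[where LF = "\<lambda>w. L (p + w)"])
    fix w assume w: "w \<in> closed_segment 0 q"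
    show "((\<lambda>w. f (p + w)) has_derivative blinfun_apply (L (p + w))) (at w)" by (rule der_shift[OF der])
    have pw: "norm (p + w) \<le> R" using seg_ball[of p 0 R q w] assms w by simp
    have nw: "norm w \<le> norm q" using seg_ball0[of 0 "norm q" q w] w by simp
    have "norm (L (p + w) - L p) \<le> \<kappa> * norm (p + w - p) powr b" using hol[OF pw assms(1)] .
    also have "\<dots> \<le> \<kappa> * norm q powr b" using nw kp bp by (intro mult_left_mono powr_mono2) auto
    finally show "norm (L (p + w) - L p) \<le> \<kappa> * norm q powr b" .
  qed
  then show ?thesis unfolding G_def by simp
qed

lemma G2:
  assumes "norm p \<le> R" "norm (p + q) \<le> R" "norm p' \<le> R" "norm (p' + q) \<le> R"
  shows "norm (G p q - G p' q) \<le> 2 * \<kappa> * norm (p - p') powr b * norm q"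
proof -
  have "norm ((f (p + q) - f (p' + q)) - (f (p + 0) - f (p' + 0)) - blinfun_apply (L p - L p') (q - 0))
      \<le> (2 * \<kappa> * norm (p - p') powr b) * norm (q - 0)"
  proof (rule mvt_gen[where LF = "\<lambda>w. L (p + w) - L (p' + w)"])
    fix w assume w: "w \<in> closed_segment 0 q"
    show "((\<lambda>w. f (p + w) - f (p' + w)) has_derivative blinfun_apply (L (p + w) - L (p' + w))) (at w)"
    proof -
      have "blinfun_apply (L (p + w) - L (p' + w)) = (\<lambda>v. blinfun_apply (L (p + w)) v - blinfun_apply (L (p' + w)) v)"
        by (rule ext) (simp add: blinfun.diff_left)
      then show ?thesis using has_derivative_diff[OF der_shift[OF der] der_shift[OF der]] by simp
    qed
    have pw: "norm (p + w) \<le> R" using seg_ball[of p 0 R q w] assms w by simp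
    have pw': "norm (p' + w) \<le> R" using seg_ball[of p' 0 R q w] assms w by simp
    have "norm (L (p + w) - L (p' + w) - (L p - L p')) \<le> norm (L (p + w) - L (p' + w)) + norm (L p - L p')"
      by (rule norm_triangle_ineq4)
    also have "\<dots> \<le> \<kappa> * norm (p - p') powr b + \<kappa> * norm (p - p') powr b"
      using hol[OF pw pw'] hol[OF assms(1,3)] by (intro add_mono) (auto simp: algebra_simps)
    finally show "norm (L (p + w) - L (p' + w) - (L p - L p')) \<le> 2 * \<kappa> * norm (p - p') powr b" by simp
  qed
  moreover have "(f (p + q) - f (p' + q)) - (f (p + 0) - f (p' + 0)) - blinfun_apply (L p - L p') (q - 0) = G p q - G p' q"
    unfolding G_def by (simp add: blinfun.diff_left algebra_simps)
  ultimately show ?thesis by simp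
qed

lemma G3:
  assumes "norm p \<le> R" "norm (p + q) \<le> R" "norm (p + q') \<le> R" "norm q \<le> m" "norm q' \<le> m"
  shows "norm (G p q - G p q') \<le> \<kappa> * m powr b * norm (q - q')"
proof -
  have "norm (f (p + q) - f (p + q') - blinfun_apply (L p) (q - q')) \<le> (\<kappa> * m powr b) * norm (q - q')"
  proof (rule mvt_gen[where LF = "\<lambda>w. L (p + w)"])
    fix w assume w: "w \<in> closed_segment q' q"
    show "((\<lambda>w. f (p + w)) has_derivative blinfun_apply (L (p + w))) (at w)" by (rule der_shift[OF der])
    have pw: "norm (p + w) \<le> R" using seg_ball[of p q' R q w] assms w by simp
    have nw: "norm w \<le> m" using seg_ball0[of q' m q w] w assms by simp
    have "norm (L (p + w) - L p) \<le> \<kappa> * norm (p + w - p) powr b" using hol[OF pw assms(1)] .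
    also have "\<dots> \<le> \<kappa> * m powr b" using nw kp bp by (intro mult_left_mono powr_mono2) auto
    finally show "norm (L (p + w) - L p) \<le> \<kappa> * m powr b" .
  qed
  moreover have "f (p + q) - f (p + q') - blinfun_apply (L p) (q - q') = G p q - G p q'"
    unfolding G_def by (simp add: blinfun.diff_right algebra_simps)
  ultimately show ?thesis by simp
qed

end


lemma field_bounds:
  fixes A :: "real \<Rightarrow> 'v::real_normed_vector \<Rightarrow> 'w::real_normed_vector"
  assumes F: "field_hoelder_loc T a b A DA" and R: "R > 0" and T: "T > 0" and a: "a > 0" and b: "b > 0"
  obtains C where "C \<ge> 0"
   "\<And>s t x. 0 \<le> s \<Longrightarrow> s \<le> t \<Longrightarrow> t \<le> T \<Longrightarrow> norm x \<le> R \<Longrightarrow> norm (A t x - A s x) \<le> C * (t - s) powr a"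
   "\<And>s t x. 0 \<le> s \<Longrightarrow> s \<le> t \<Longrightarrow> t \<le> T \<Longrightarrow> norm x \<le> R \<Longrightarrow> norm (DA t x - DA s x) \<le> C * (t - s) powr a"
   "\<And>s t x y. 0 \<le> s \<Longrightarrow> s \<le> t \<Longrightarrow> t \<le> T \<Longrightarrow> norm x \<le> R \<Longrightarrow> norm y \<le> R \<Longrightarrow>
      norm ((A t x - A s x) - (A t y - A s y)) \<le> C * (t - s) powr a * norm (x - y) powr b"
   "\<And>s t x y. 0 \<le> s \<Longrightarrow> s \<le> t \<Longrightarrow> t \<le> T \<Longrightarrow> norm x \<le> R \<Longrightarrow> norm y \<le> R \<Longrightarrow>
      norm ((DA t x - DA s x) - (DA t y - DA s y)) \<le> C * (t - s) powr a * norm (x - y) powr b"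
proof -
  have ex: "\<forall>R>0. \<exists>C. \<forall>s t. 0 \<le> s \<and> s < t \<and> t \<le> T \<longrightarrow>
        (\<forall>x y. norm x \<le> R \<and> norm y \<le> R \<and> x \<noteq> y \<longrightarrow>
            norm ((A t x - A s x) - (A t y - A s y)) \<le> C * (t - s) powr a * norm (x - y) powr b
          \<and> norm ((DA t x - DA s x) - (DA t y - DA s y)) \<le> C * (t - s) powr a * norm (x - y) powr b)
      \<and> (\<forall>x. norm x \<le> R \<longrightarrow>
            norm (A t x - A s x) \<le> C * (t - s) powr a
          \<and> norm (DA t x - DA s x) \<le> C * (t - s) powr a)"
    using F unfolding field_hoelder_loc_def by (rule conjunct2[OF conjunct2])
  obtain C where C: "\<forall>s t. 0 \<le> s \<and> s < t \<and> t \<le> T \<longrightarrow>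
        (\<forall>x y. norm x \<le> R \<and> norm y \<le> R \<and> x \<noteq> y \<longrightarrow>
            norm ((A t x - A s x) - (A t y - A s y)) \<le> C * (t - s) powr a * norm (x - y) powr b
          \<and> norm ((DA t x - DA s x) - (DA t y - DA s y)) \<le> C * (t - s) powr a * norm (x - y) powr b)
      \<and> (\<forall>x. norm x \<le> R \<longrightarrow>
            norm (A t x - A s x) \<le> C * (t - s) powr a
          \<and> norm (DA t x - DA s x) \<le> C * (t - s) powr a)"
    using mp[OF spec[OF ex, of R] R] by (elim exE) assumption
  have C1: "norm (A t x - A s x) \<le> C * (t - s) powr a \<and> norm (DA t x - DA s x) \<le> C * (t - s) powr a"
    if "0 \<le> s" "s < t" "t \<le> T" "norm x \<le> R" for s t x
  proof -
    have st: "0 \<le> s \<and> s < t \<and> t \<le> T" using that by simp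
    note H = mp[OF spec[OF spec[OF C, of s], of t] st]
    show ?thesis using conjunct2[OF H, rule_format, OF that(4)] .
  qed
  have C2: "norm ((A t x - A s x) - (A t y - A s y)) \<le> C * (t - s) powr a * norm (x - y) powr b
          \<and> norm ((DA t x - DA s x) - (DA t y - DA s y)) \<le> C * (t - s) powr a * norm (x - y) powr b"
    if "0 \<le> s" "s < t" "t \<le> T" "norm x \<le> R" "norm y \<le> R" "x \<noteq> y" for s t x y
  proof -
    have st: "0 \<le> s \<and> s < t \<and> t \<le> T" using that by simp
    note H = mp[OF spec[OF spec[OF C, of s], of t] st]
    show ?thesis using conjunct1[OF H, rule_format, OF conjI[OF that(4) conjI[OF that(5) that(6)]]] .
  qed
  have "norm (A T 0 - A 0 0) \<le> C * (T - 0) powr a" using C1[of 0 T 0] T R by simp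
  then have "norm (A T 0 - A 0 0) \<le> C * T powr a" by simp
  then have "0 \<le> C * T powr a" using norm_ge_zero[of "A T 0 - A 0 0"] by linarith
  then have C0: "C \<ge> 0" using T by (simp add: zero_le_mult_iff)
  show ?thesis
  proof (rule that[OF C0])
    fix s t :: real and x :: 'v assume h: "0 \<le> s" "s \<le> t" "t \<le> T" "norm x \<le> R"
    show "norm (A t x - A s x) \<le> C * (t - s) powr a"
    proof (cases "s = t")
      case False then show ?thesis using C1[of s t x] h by simp
    qed (use C0 in simp)
    show "norm (DA t x - DA s x) \<le> C * (t - s) powr a"
    proof (cases "s = t")
      case False then show ?thesis using C1[of s t x] h by simp
    qed (use C0 in simp)
  next
    fix s t :: real and x y :: 'v assume h: "0 \<le> s" "s \<le> t" "t \<le> T" "norm x \<le> R" "norm y \<le> R"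
    show "norm ((A t x - A s x) - (A t y - A s y)) \<le> C * (t - s) powr a * norm (x - y) powr b"
    proof (cases "s = t \<or> x = y")
      case False then show ?thesis using C2[of s t x y] h by simp
    qed (use C0 in auto)
    show "norm ((DA t x - DA s x) - (DA t y - DA s y)) \<le> C * (t - s) powr a * norm (x - y) powr b"
    proof (cases "s = t \<or> x = y")
      case False then show ?thesis using C2[of s t x y] h by simp
    qed (use C0 in auto)
  qed
qed

lemma pw:
  fixes s u t T X H g a e \<theta> :: real
  assumes "0 \<le> s" "s \<le> u" "u \<le> t" "t \<le> T" "0 \<le> X" "X \<le> H * (u - s) powr g" "H \<ge> 0"
    "a > 0" "g > 0" "e > 0" "\<theta> \<ge> 0" "\<theta> \<le> a + g * e"
  shows "(t - u) powr a * X powr e \<le> H powr e * T powr (a + g * e - \<theta>) * (t - s) powr \<theta>"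
proof -
  have "X powr e \<le> (H * (u - s) powr g) powr e" using assms by (intro powr_mono2) auto
  also have "\<dots> = H powr e * (u - s) powr (g * e)" using assms by (simp add: powr_mult powr_powr)
  also have "\<dots> \<le> H powr e * (t - s) powr (g * e)" using assms by (intro mult_left_mono powr_mono2) auto
  finally have 1: "X powr e \<le> H powr e * (t - s) powr (g * e)" .
  have 2: "(t - u) powr a \<le> (t - s) powr a" using assms by (intro powr_mono2) auto
  have "(t - u) powr a * X powr e \<le> (t - s) powr a * (H powr e * (t - s) powr (g * e))"
    using 1 2 by (intro mult_mono) auto
  also have "\<dots> = H powr e * (t - s) powr (a + g * e)" by (simp add: powr_add)
  also have "\<dots> \<le> H powr e * (T powr (a + g * e - \<theta>) * (t - s) powr \<theta>)"
    using pow_T[of "t - s" T \<theta> "a + g * e"] assms by (intro mult_left_mono) auto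
  finally show ?thesis by (simp add: algebra_simps)
qed

lemma interp:
  fixes X c P Q l :: real
  assumes "0 \<le> X" "X \<le> c * P" "X \<le> c * Q" "c \<ge> 0" "P \<ge> 0" "Q \<ge> 0" "0 \<le> l" "l \<le> 1"
  shows "X \<le> c * (P powr l * Q powr (1 - l))"
proof (cases "X = 0")
  case True then show ?thesis using assms by simp
next
  case False
  then have X: "X > 0" using assms by simp
  then have cP: "c * P > 0" and cQ: "c * Q > 0" using assms by linarith+
  then have pos: "c > 0" "P > 0" "Q > 0" using assms by (auto simp: zero_less_mult_iff)
  have "X = X powr l * X powr (1 - l)" using X by (simp add: powr_add[symmetric])
  also have "\<dots> \<le> (c * P) powr l * (c * Q) powr (1 - l)"
    using assms X by (intro mult_mono powr_mono2) auto
  also have "\<dots> = c * (P powr l * Q powr (1 - l))" using pos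
    by (simp add: powr_mult powr_add[symmetric] algebra_simps)
  finally show ?thesis .
qed

lemma hpi_add:
  assumes "has_psum_integral f t I" "has_psum_integral h t J"
  shows "has_psum_integral (\<lambda>u v. f u v + h u v) t (I + J)"
  unfolding has_psum_integral_def
proof (intro allI impI)
  fix e :: real assume e: "e > 0"
  obtain d1 where d1: "d1 > 0" "\<And>P. is_partition t P \<and> mesh P < d1 \<Longrightarrow> norm (psum f P - I) < e/2"
    using assms(1) e unfolding has_psum_integral_def by (meson half_gt_zero)
  obtain d2 where d2: "d2 > 0" "\<And>P. is_partition t P \<and> mesh P < d2 \<Longrightarrow> norm (psum h P - J) < e/2"
    using assms(2) e unfolding has_psum_integral_def by (meson half_gt_zero)
  show "\<exists>d>0. \<forall>P. is_partition t P \<and> mesh P < d \<longrightarrow> norm (psum (\<lambda>u v. f u v + h u v) P - (I + J)) < e"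
  proof (intro exI[of _ "min d1 d2"] conjI allI impI)
    show "min d1 d2 > 0" using d1 d2 by simp
    fix P assume P: "is_partition t P \<and> mesh P < min d1 d2"
    have eq: "psum (\<lambda>u v. f u v + h u v) P - (I + J) = (psum f P - I) + (psum h P - J)"
      unfolding psum_def by (simp add: sum.distrib algebra_simps)
    have n1: "norm (psum f P - I) < e/2" and n2: "norm (psum h P - J) < e/2" using d1 d2 P by auto
    have "norm (psum (\<lambda>u v. f u v + h u v) P - (I + J)) \<le> norm (psum f P - I) + norm (psum h P - J)"
      unfolding eq by (rule norm_triangle_ineq)
    then show "norm (psum (\<lambda>u v. f u v + h u v) P - (I + J)) < e" using n1 n2 by linarith
  qed
qed

lemma hpi_scale:
  assumes "has_psum_integral f t I"
  shows "has_psum_integral (\<lambda>u v. c *\<^sub>R f u v) t (c *\<^sub>R I)"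
  unfolding has_psum_integral_def
proof (intro allI impI)
  fix e :: real assume e: "e > 0"
  have e': "e / (\<bar>c\<bar> + 1) > 0" using e by simp
  obtain d where d: "d > 0" "\<And>P. is_partition t P \<and> mesh P < d \<Longrightarrow> norm (psum f P - I) < e / (\<bar>c\<bar> + 1)"
    using assms e' unfolding has_psum_integral_def by meson
  show "\<exists>d>0. \<forall>P. is_partition t P \<and> mesh P < d \<longrightarrow> norm (psum (\<lambda>u v. c *\<^sub>R f u v) P - c *\<^sub>R I) < e"
  proof (intro exI[of _ d] conjI allI impI d(1))
    fix P assume P: "is_partition t P \<and> mesh P < d"
    have "psum (\<lambda>u v. c *\<^sub>R f u v) P - c *\<^sub>R I = c *\<^sub>R (psum f P - I)"
      unfolding psum_def by (simp add: scaleR_sum_right scaleR_diff_right)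
    then have "norm (psum (\<lambda>u v. c *\<^sub>R f u v) P - c *\<^sub>R I) = \<bar>c\<bar> * norm (psum f P - I)" by simp
    also have "\<dots> \<le> \<bar>c\<bar> * (e / (\<bar>c\<bar> + 1))" using d(2)[OF P] by (intro mult_left_mono) auto
    also have "\<dots> < e" using e by (simp add: field_simps)
    finally show "norm (psum (\<lambda>u v. c *\<^sub>R f u v) P - c *\<^sub>R I) < e" .
  qed
qed

lemma hpi_cong:
  assumes "has_psum_integral f t I" "\<And>u v. f u v = h u v"
  shows "has_psum_integral h t I"
proof -
  have "f = h" using assms(2) by (intro ext) auto
  then show ?thesis using assms(1) by simp
qed


locale mainloc =
  fixes T a b g :: real and A :: "real \<Rightarrow> 'v::banach \<Rightarrow> 'w::banach" and DA :: "real \<Rightarrow> 'v \<Rightarrow> ('v \<Rightarrow>\<^sub>L 'w)"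
    and x :: "real \<Rightarrow> 'v" and Sx Hx C :: real
  assumes T: "T > 0" and a0: "0 < a" and a1: "a < 1" and b0: "0 < b" and b1: "b < 1"
    and g0: "0 < g" and g1: "g < 1" and abg: "a + b * g > 1"
    and der: "\<And>t z. 0 \<le> t \<Longrightarrow> t \<le> T \<Longrightarrow> (A t has_derivative blinfun_apply (DA t z)) (at z)"
    and xb: "\<And>t. 0 \<le> t \<Longrightarrow> t \<le> T \<Longrightarrow> norm (x t) \<le> Sx"
    and xh: "\<And>s t. 0 \<le> s \<Longrightarrow> s \<le> t \<Longrightarrow> t \<le> T \<Longrightarrow> norm (x t - x s) \<le> Hx * (t - s) powr g"
    and Sx: "Sx \<ge> 0" and Hx: "Hx \<ge> 0" and C0: "C \<ge> 0"
    and CA: "\<And>s t z. 0 \<le> s \<Longrightarrow> s \<le> t \<Longrightarrow> t \<le> T \<Longrightarrow> norm z \<le> Sx + 1 \<Longrightarrow>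
        norm (A t z - A s z) \<le> C * (t - s) powr a"
    and CDA: "\<And>s t z. 0 \<le> s \<Longrightarrow> s \<le> t \<Longrightarrow> t \<le> T \<Longrightarrow> norm z \<le> Sx + 1 \<Longrightarrow>
        norm (DA t z - DA s z) \<le> C * (t - s) powr a"
    and CA2: "\<And>s t z z'. 0 \<le> s \<Longrightarrow> s \<le> t \<Longrightarrow> t \<le> T \<Longrightarrow> norm z \<le> Sx + 1 \<Longrightarrow> norm z' \<le> Sx + 1 \<Longrightarrow>
        norm ((A t z - A s z) - (A t z' - A s z')) \<le> C * (t - s) powr a * norm (z - z') powr b"
    and CDA2: "\<And>s t z z'. 0 \<le> s \<Longrightarrow> s \<le> t \<Longrightarrow> t \<le> T \<Longrightarrow> norm z \<le> Sx + 1 \<Longrightarrow> norm z' \<le> Sx + 1 \<Longrightarrow>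
        norm ((DA t z - DA s z) - (DA t z' - DA s z')) \<le> C * (t - s) powr a * norm (z - z') powr b"
begin

definition "th = (1 + a + b * g) / 2"
definition "rho = (a + b * g - 1) / (2 * g)"
definition "cs = (1 + T powr a) * (1 + Kc th * T powr (th - a))"

lemma cstl:
  shows "th > 1" "th \<le> a + g * b" "th \<le> a + g * 1" "th \<ge> 0" "rho > 0" "rho < b"
    "a + g * (b - rho) = th" "cs \<ge> 0"
proof -
  show "th > 1" "th \<le> a + g * b" "th \<ge> 0" unfolding th_def using abg by (auto simp: algebra_simps)
  have "b * g < g" using b1 g0 by simp
  then show "th \<le> a + g * 1" unfolding th_def using abg by (auto simp: algebra_simps)
  show "rho > 0" unfolding rho_def using abg g0 by simp
  have "a + b * g - 1 < 2 * g * b" using a1 b0 g0 by (simp add: algebra_simps) (smt (verit) mult_pos_pos)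
  then show "rho < b" unfolding rho_def using g0 by (simp add: divide_less_eq algebra_simps)
  show "a + g * (b - rho) = th" unfolding rho_def th_def using g0 by (simp add: field_simps)
  have "Kc th > 0" using Kc_props \<open>th > 1\<close> by blast
  then show "cs \<ge> 0" unfolding cs_def by simp
qed

lemma GL:
  assumes "0 \<le> u" "u \<le> t" "t \<le> T"
  shows "Gloc (\<lambda>z. A t z - A u z) (\<lambda>z. DA t z - DA u z) (C * (t - u) powr a) (Sx + 1) b"
proof
  fix z :: 'v
  have e: "blinfun_apply (DA t z - DA u z) = (\<lambda>h. blinfun_apply (DA t z) h - blinfun_apply (DA u z) h)"
    by (rule ext) (simp add: blinfun.diff_left)
  show "((\<lambda>z. A t z - A u z) has_derivative blinfun_apply (DA t z - DA u z)) (at z)"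
    unfolding e using has_derivative_diff[OF der[of t z] der[of u z]] assms by simp
next
  fix z z' :: 'v assume "norm z \<le> Sx + 1" "norm z' \<le> Sx + 1"
  then show "norm ((DA t z - DA u z) - (DA t z' - DA u z')) \<le> C * (t - u) powr a * norm (z - z') powr b"
    using CDA2[of u t z z'] assms by simp
next
  show "C * (t - u) powr a \<ge> 0" using C0 by simp
  show "b > 0" using b0 .
qed

definition "Xn s t = A t (x s) - A s (x s)"
definition "Xl y s t = blinfun_apply (DA t (x s) - DA s (x s)) (y s)"
definition "Xr y s t = (A t (x s + y s) - A s (x s + y s)) - Xn s t - Xl y s t"

lemma xR: "0 \<le> t \<Longrightarrow> t \<le> T \<Longrightarrow> norm (x t) \<le> Sx + 1" using xb[of t] by simp

lemma sew_n:
  shows "\<forall>t\<in>{0..T}. has_psum_integral Xn t (psum_integral Xn t)"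
    "hoelder_path a T (psum_integral Xn)"
proof -
  define M where "M = C * Hx powr b * T powr (a + g * b - th)"
  have M: "M \<ge> 0" unfolding M_def using C0 by simp
  have bnd: "norm (Xn s t) \<le> C * (t - s) powr a" if "0 \<le> s" "s \<le> t" "t \<le> T" for s t
    unfolding Xn_def using CA[OF that xR] that by simp
  have delta: "norm (Xn s t - Xn s u - Xn u t) \<le> M * (t - s) powr th"
    if h: "0 \<le> s" "s \<le> u" "u \<le> t" "t \<le> T" for s u t
  proof -
    have eq: "Xn s t - Xn s u - Xn u t = (A t (x s) - A u (x s)) - (A t (x u) - A u (x u))"
      unfolding Xn_def by (simp add: algebra_simps)
    have n1: "norm ((A t (x s) - A u (x s)) - (A t (x u) - A u (x u))) \<le> C * (t - u) powr a * norm (x s - x u) powr b"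
      using CA2[of u t "x s" "x u"] xR[of s] xR[of u] h by simp
    have dx: "norm (x s - x u) \<le> Hx * (u - s) powr g" using xh[of s u] h by (simp add: norm_minus_commute)
    have p: "(t - u) powr a * norm (x s - x u) powr b \<le> Hx powr b * T powr (a + g * b - th) * (t - s) powr th"
      using pw[OF h(1-4) _ dx Hx a0 g0 b0] cstl by simp
    have "C * (t - u) powr a * norm (x s - x u) powr b \<le> C * (Hx powr b * T powr (a + g * b - th) * (t - s) powr th)"
      using mult_left_mono[OF p C0] by (simp add: mult.assoc)
    then show ?thesis using n1 unfolding eq M_def by (simp add: mult.assoc)
  qed
  note S = sewing[OF T cstl(1) M C0 a0 _ bnd delta]
  show "\<forall>t\<in>{0..T}. has_psum_integral Xn t (psum_integral Xn t)" using S(1) a1 by simp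
  show "hoelder_path a T (psum_integral Xn)" using S(2) a1 by simp
qed

lemma sew_l:
  assumes yb: "\<And>t. 0 \<le> t \<Longrightarrow> t \<le> T \<Longrightarrow> norm (y t) \<le> N"
    and yh: "\<And>s t. 0 \<le> s \<Longrightarrow> s \<le> t \<Longrightarrow> t \<le> T \<Longrightarrow> norm (y t - y s) \<le> N * (t - s) powr g"
    and N: "N \<ge> 0"
  shows "\<forall>t\<in>{0..T}. has_psum_integral (Xl y) t (psum_integral (Xl y) t)"
    "hoelder_path a T (psum_integral (Xl y))"
    "hoelder_norm a T (psum_integral (Xl y)) \<le> cs * (C * (1 + Hx powr b * T powr (a + g * b - th) + T powr (a + g - th))) * N"
proof -
  define M where "M = C * N * (Hx powr b * T powr (a + g * b - th) + T powr (a + g - th))"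
  have M: "M \<ge> 0" unfolding M_def using C0 N by simp
  have B: "C * N \<ge> 0" using C0 N by simp
  have bnd: "norm (Xl y s t) \<le> (C * N) * (t - s) powr a" if "0 \<le> s" "s \<le> t" "t \<le> T" for s t
  proof -
    have "norm (Xl y s t) \<le> norm (DA t (x s) - DA s (x s)) * norm (y s)" unfolding Xl_def by (rule norm_blinfun)
    also have "\<dots> \<le> (C * (t - s) powr a) * N"
      using CDA[OF that xR] yb[of s] that C0 by (intro mult_mono) auto
    finally show ?thesis by (simp add: algebra_simps)
  qed
  have delta: "norm (Xl y s t - Xl y s u - Xl y u t) \<le> M * (t - s) powr th"
    if h: "0 \<le> s" "s \<le> u" "u \<le> t" "t \<le> T" for s u t
  proof -
    have eq: "Xl y s t - Xl y s u - Xl y u t =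
        blinfun_apply ((DA t (x s) - DA u (x s)) - (DA t (x u) - DA u (x u))) (y s)
        + blinfun_apply (DA t (x u) - DA u (x u)) (y s - y u)"
      unfolding Xl_def by (simp add: blinfun.diff_left blinfun.diff_right blinfun.add_left algebra_simps)
    have n1: "norm (blinfun_apply ((DA t (x s) - DA u (x s)) - (DA t (x u) - DA u (x u))) (y s))
        \<le> (C * (t - u) powr a * norm (x s - x u) powr b) * N"
      using order_trans[OF norm_blinfun mult_mono[OF CDA2[of u t "x s" "x u"] yb[of s]]] xR[of s] xR[of u] h C0 by simp
    have dx: "norm (x s - x u) \<le> Hx * (u - s) powr g" using xh[of s u] h by (simp add: norm_minus_commute)
    have p1: "(t - u) powr a * norm (x s - x u) powr b \<le> Hx powr b * T powr (a + g * b - th) * (t - s) powr th"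
      using pw[OF h(1-4) _ dx Hx a0 g0 b0] cstl by simp
    have n2: "norm (blinfun_apply (DA t (x u) - DA u (x u)) (y s - y u)) \<le> (C * (t - u) powr a) * norm (y s - y u)"
      using order_trans[OF norm_blinfun mult_right_mono[OF CDA[of u t "x u"]]] xR[of u] h by simp
    have dy: "norm (y s - y u) \<le> N * (u - s) powr g" using yh[of s u] h by (simp add: norm_minus_commute)
    have p2: "(t - u) powr a * norm (y s - y u) powr 1 \<le> N powr 1 * T powr (a + g * 1 - th) * (t - s) powr th"
      using pw[OF h(1-4) _ dy N a0 g0, of 1 th] cstl by simp
    then have p2': "(t - u) powr a * norm (y s - y u) \<le> N * T powr (a + g - th) * (t - s) powr th"
      using N by simp
    have "norm (Xl y s t - Xl y s u - Xl y u t) \<le> (C * (t - u) powr a * norm (x s - x u) powr b) * N + (C * (t - u) powr a) * norm (y s - y u)"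
      unfolding eq using norm_triangle_ineq[of "blinfun_apply ((DA t (x s) - DA u (x s)) - (DA t (x u) - DA u (x u))) (y s)"
        "blinfun_apply (DA t (x u) - DA u (x u)) (y s - y u)"] n1 n2 by linarith
    also have "\<dots> = C * N * ((t - u) powr a * norm (x s - x u) powr b) + C * ((t - u) powr a * norm (y s - y u))"
      by (simp add: algebra_simps)
    also have "\<dots> \<le> C * N * (Hx powr b * T powr (a + g * b - th) * (t - s) powr th) + C * (N * T powr (a + g - th) * (t - s) powr th)"
      using B C0 p1 p2' by (intro add_mono mult_left_mono) auto
    also have "\<dots> = M * (t - s) powr th" unfolding M_def by (simp add: algebra_simps)
    finally show ?thesis .
  qed
  note S = sewing[OF T cstl(1) M B a0 _ bnd delta]
  show "\<forall>t\<in>{0..T}. has_psum_integral (Xl y) t (psum_integral (Xl y) t)" using S(1) a1 by simp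
  show "hoelder_path a T (psum_integral (Xl y))" using S(2) a1 by simp
  have "hoelder_norm a T (psum_integral (Xl y)) \<le> cs * (C * N + M)" using S(3) a1 unfolding cs_def by simp
  also have "\<dots> = cs * (C * (1 + Hx powr b * T powr (a + g * b - th) + T powr (a + g - th))) * N"
    unfolding M_def by (simp add: algebra_simps)
  finally show "hoelder_norm a T (psum_integral (Xl y)) \<le> cs * (C * (1 + Hx powr b * T powr (a + g * b - th) + T powr (a + g - th))) * N" .
qed

lemma sew_r:
  assumes yb: "\<And>t. 0 \<le> t \<Longrightarrow> t \<le> T \<Longrightarrow> norm (y t) \<le> N"
    and yh: "\<And>s t. 0 \<le> s \<Longrightarrow> s \<le> t \<Longrightarrow> t \<le> T \<Longrightarrow> norm (y t - y s) \<le> N * (t - s) powr g"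
    and N: "N \<ge> 0" and N1: "N \<le> 1"
  shows "\<forall>t\<in>{0..T}. has_psum_integral (Xr y) t (psum_integral (Xr y) t)"
    "hoelder_norm a T (psum_integral (Xr y)) \<le> cs * (C + 2 * C * Hx powr (b - rho) + C * T powr (a + g - th)) * (N * N powr rho)"
proof -
  have yR: "norm (x s + y t) \<le> Sx + 1" if "0 \<le> s" "s \<le> T" "0 \<le> t" "t \<le> T" for s t
    using norm_triangle_ineq[of "x s" "y t"] xb[of s] yb[of t] that N1 by simp
  have Nb: "N powr b \<le> N powr rho" using N N1 cstl by (intro powr_mono') auto
  define Br where "Br = C * N powr b * N"
  define Mr where "Mr = 2 * C * N * N powr rho * Hx powr (b - rho) + C * N powr b * N * T powr (a + g - th)"
  have Br: "Br \<ge> 0" unfolding Br_def using C0 N by simp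
  have Mr: "Mr \<ge> 0" unfolding Mr_def using C0 N Hx by simp
  have bnd: "norm (Xr y s t) \<le> Br * (t - s) powr a" if h: "0 \<le> s" "s \<le> t" "t \<le> T" for s t
  proof -
    interpret Gs: Gloc "\<lambda>z. A t z - A s z" "\<lambda>z. DA t z - DA s z" "C * (t - s) powr a" "Sx + 1" b
      by (rule GL) (use h in auto)
    have eq: "Xr y s t = Gs.G (x s) (y s)"
      unfolding Xr_def Xn_def Xl_def Gs.G_def by simp
    have "norm (Gs.G (x s) (y s)) \<le> C * (t - s) powr a * norm (y s) powr b * norm (y s)"
      using Gs.G1[OF xR yR] h by simp
    also have "\<dots> \<le> C * (t - s) powr a * N powr b * N"
      using yb[of s] h C0 b0 a0 by (intro mult_mono powr_mono2 mult_nonneg_nonneg) auto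
    finally show ?thesis unfolding eq Br_def by (simp add: algebra_simps)
  qed
  have delta: "norm (Xr y s t - Xr y s u - Xr y u t) \<le> Mr * (t - s) powr th"
    if h: "0 \<le> s" "s \<le> u" "u \<le> t" "t \<le> T" for s u t
  proof -
    interpret Gu: Gloc "\<lambda>z. A t z - A u z" "\<lambda>z. DA t z - DA u z" "C * (t - u) powr a" "Sx + 1" b
      by (rule GL) (use h in auto)
    define \<kappa> where "\<kappa> = C * (t - u) powr a"
    have k: "\<kappa> \<ge> 0" unfolding \<kappa>_def using C0 by simp
    have eq: "Xr y s t - Xr y s u - Xr y u t = (Gu.G (x s) (y s) - Gu.G (x u) (y s)) + (Gu.G (x u) (y s) - Gu.G (x u) (y u))"
      unfolding Xr_def Xn_def Xl_def Gu.G_def by (simp add: blinfun.diff_left blinfun.add_left algebra_simps)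
    have r1: "norm (x s) \<le> Sx + 1" "norm (x u) \<le> Sx + 1" "norm (x s + y s) \<le> Sx + 1"
        "norm (x u + y s) \<le> Sx + 1" "norm (x u + y u) \<le> Sx + 1"
      using xR yR h by auto
    define D1 where "D1 = norm (Gu.G (x s) (y s) - Gu.G (x u) (y s))"
    define ys where "ys = norm (y s)"
    define dx where "dx = norm (x s - x u)"
    have ys: "0 \<le> ys" "ys \<le> N" unfolding ys_def using yb[of s] h by auto
    have dxb: "dx \<le> Hx * (u - s) powr g" unfolding dx_def using xh[of s u] h by (simp add: norm_minus_commute)
    have D1a: "D1 \<le> (2 * \<kappa> * ys) * (ys powr b)"
    proof -
      have "D1 \<le> norm (Gu.G (x s) (y s)) + norm (Gu.G (x u) (y s))" unfolding D1_def by (rule norm_triangle_ineq4)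
      also have "\<dots> \<le> \<kappa> * ys powr b * ys + \<kappa> * ys powr b * ys"
        unfolding \<kappa>_def ys_def by (intro add_mono Gu.G1) (use r1 in auto)
      finally show ?thesis by (simp add: algebra_simps)
    qed
    have D1b: "D1 \<le> (2 * \<kappa> * ys) * (dx powr b)"
      using Gu.G2[OF r1(1) r1(3) r1(2) r1(4)] unfolding D1_def \<kappa>_def ys_def dx_def by (simp add: algebra_simps)
    have lb: "0 \<le> rho / b" "rho / b \<le> 1" using cstl b0 by auto
    have "D1 \<le> (2 * \<kappa> * ys) * ((ys powr b) powr (rho / b) * (dx powr b) powr (1 - rho / b))"
      by (rule interp[OF _ D1a D1b _ _ _ lb]) (use k ys in \<open>auto simp: D1_def dx_def\<close>)
    also have "(ys powr b) powr (rho / b) = ys powr rho" using b0 by (simp add: powr_powr)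
    also have "(dx powr b) powr (1 - rho / b) = dx powr (b - rho)" using b0 by (simp add: powr_powr algebra_simps)
    finally have D1c: "D1 \<le> 2 * C * ys * ys powr rho * ((t - u) powr a * dx powr (b - rho))"
      unfolding \<kappa>_def by (simp add: algebra_simps)
    have p1: "(t - u) powr a * dx powr (b - rho) \<le> Hx powr (b - rho) * T powr (a + g * (b - rho) - th) * (t - s) powr th"
      using pw[OF h(1-4) _ dxb Hx a0 g0, of "b - rho" th] cstl unfolding dx_def by simp
    have "T powr (a + g * (b - rho) - th) = 1" using cstl(7) T by simp
    then have p1': "(t - u) powr a * dx powr (b - rho) \<le> Hx powr (b - rho) * (t - s) powr th" using p1 by simp
    have q: "ys * ys powr rho \<le> N * N powr rho" using ys cstl by (intro mult_mono powr_mono2) auto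
    have "2 * C * (ys * ys powr rho) * ((t - u) powr a * dx powr (b - rho))
        \<le> 2 * C * (N * N powr rho) * (Hx powr (b - rho) * (t - s) powr th)"
    proof -
      have A1: "2 * C * (ys * ys powr rho) \<le> 2 * C * (N * N powr rho)" using mult_left_mono[OF q] C0 by simp
      have nn1: "0 \<le> 2 * C * (N * N powr rho)" using C0 N by simp
      have nn2: "0 \<le> (t - u) powr a * dx powr (b - rho)" by simp
      show ?thesis using mult_mono[OF A1 p1' nn1 nn2] .
    qed
    then have D1d: "D1 \<le> 2 * C * (N * N powr rho) * (Hx powr (b - rho) * (t - s) powr th)"
      using D1c by (simp add: mult.assoc)
    define D2 where "D2 = norm (Gu.G (x u) (y s) - Gu.G (x u) (y u))"
    have D2a: "D2 \<le> \<kappa> * N powr b * norm (y s - y u)"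
      unfolding D2_def \<kappa>_def by (rule Gu.G3) (use r1 yb h in auto)
    have dy: "norm (y s - y u) \<le> N * (u - s) powr g" using yh[of s u] h by (simp add: norm_minus_commute)
    have p2: "(t - u) powr a * norm (y s - y u) powr 1 \<le> N powr 1 * T powr (a + g * 1 - th) * (t - s) powr th"
      using pw[OF h(1-4) _ dy N a0 g0, of 1 th] cstl by simp
    then have p2': "(t - u) powr a * norm (y s - y u) \<le> N * T powr (a + g - th) * (t - s) powr th"
      using N by simp
    have D2b: "D2 \<le> C * N powr b * (N * T powr (a + g - th) * (t - s) powr th)"
    proof -
      have "D2 \<le> C * N powr b * ((t - u) powr a * norm (y s - y u))" using D2a unfolding \<kappa>_def by (simp add: algebra_simps)
      also have "\<dots> \<le> C * N powr b * (N * T powr (a + g - th) * (t - s) powr th)"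
        using p2' C0 by (intro mult_left_mono) auto
      finally show ?thesis .
    qed
    have "norm (Xr y s t - Xr y s u - Xr y u t) \<le> D1 + D2"
      unfolding eq D1_def D2_def by (rule norm_triangle_ineq)
    also have "\<dots> \<le> Mr * (t - s) powr th" using D1d D2b unfolding Mr_def by (simp add: algebra_simps)
    finally show ?thesis .
  qed
  note S = sewing[OF T cstl(1) Mr Br a0 _ bnd delta]
  show "\<forall>t\<in>{0..T}. has_psum_integral (Xr y) t (psum_integral (Xr y) t)" using S(1) a1 by simp
  have "hoelder_norm a T (psum_integral (Xr y)) \<le> cs * (Br + Mr)" using S(3) a1 unfolding cs_def by simp
  also have "Br + Mr \<le> (C + 2 * C * Hx powr (b - rho) + C * T powr (a + g - th)) * (N * N powr rho)"
  proof -
    have "C * N powr b * N \<le> C * N powr rho * N" using Nb C0 N by (intro mult_right_mono mult_left_mono) auto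
    moreover have "C * N powr b * N * T powr (a + g - th) \<le> C * N powr rho * N * T powr (a + g - th)"
      using Nb C0 N by (intro mult_right_mono mult_left_mono) auto
    ultimately show ?thesis unfolding Br_def Mr_def by (simp add: algebra_simps)
  qed
  then have "cs * (Br + Mr) \<le> cs * ((C + 2 * C * Hx powr (b - rho) + C * T powr (a + g - th)) * (N * N powr rho))"
    using cstl by (intro mult_left_mono) auto
  finally show "hoelder_norm a T (psum_integral (Xr y)) \<le> cs * (C + 2 * C * Hx powr (b - rho) + C * T powr (a + g - th)) * (N * N powr rho)"
    by (simp add: mult.assoc)
qed

end


theorem mainTheorem17:
  fixes T a b g :: real
    and A :: "real \<Rightarrow> 'v::banach \<Rightarrow> 'w::banach"
    and DA :: "real \<Rightarrow> 'v \<Rightarrow> ('v \<Rightarrow>\<^sub>L 'w)"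
  assumes "T > 0"
    and "separable_space (euclidean :: 'v topology)"
    and "separable_space (euclidean :: 'w topology)"
    and "0 < a" "a < 1" "0 < b" "b < 1" "0 < g" "g < 1"
    and "a + b * g > 1"
    and "field_hoelder_loc T a b A DA"
  shows "\<forall>x. hoelder_path g T x \<longrightarrow>
     \<comment> \<open>F is well defined as a map C^g_t V -> C^a_t W\<close>
     (\<forall>t\<in>{0..T}. \<exists>I. has_psum_integral (\<lambda>u v. A v (x u) - A u (x u)) t I)
   \<and> hoelder_path a T (nl_int A x)
     \<comment> \<open>the candidate derivative is well defined, linear and bounded C^g_t V -> C^a_t W\<close>
   \<and> (\<forall>y. hoelder_path g T y \<longrightarrow>
        (\<forall>t\<in>{0..T}. \<exists>I. has_psum_integral (\<lambda>u v. blinfun_apply (DA v (x u) - DA u (x u)) (y u)) t I))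
   \<and> (\<forall>y z c d. hoelder_path g T y \<and> hoelder_path g T z \<longrightarrow>
        (\<forall>t\<in>{0..T}. lin_int DA x (\<lambda>s. c *\<^sub>R y s + d *\<^sub>R z s) t
                     = c *\<^sub>R lin_int DA x y t + d *\<^sub>R lin_int DA x z t))
   \<and> (\<exists>C. \<forall>y. hoelder_path g T y \<longrightarrow>
        hoelder_path a T (lin_int DA x y) \<and>
        hoelder_norm a T (lin_int DA x y) \<le> C * hoelder_norm g T y)
     \<comment> \<open>Frechet differentiability at x with DF(x) = lin_int DA x\<close>
   \<and> (\<forall>e>0. \<exists>d>0. \<forall>y. hoelder_path g T y \<and> hoelder_norm g T y < d \<longrightarrow>
        hoelder_norm a T (\<lambda>t. nl_int A (\<lambda>s. x s + y s) t - nl_int A x t - lin_int DA x y t)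
          \<le> e * hoelder_norm g T y)"
proof (intro allI impI)
  fix x :: "real \<Rightarrow> 'v" assume hx: "hoelder_path g T x"
  note HB = hoelder_bounds[OF hx assms(1)]
  define Sx where "Sx = Sup (hoelder_sup T x)"
  define Hx where "Hx = Sup (hoelder_quot g T x)"
  have R: "Sx + 1 > 0" using HB(3) unfolding Sx_def by simp
  obtain C where C0: "C \<ge> 0"
   and CA: "\<And>s t x. 0 \<le> s \<Longrightarrow> s \<le> t \<Longrightarrow> t \<le> T \<Longrightarrow> norm x \<le> Sx + 1 \<Longrightarrow> norm (A t x - A s x) \<le> C * (t - s) powr a"
   and CDA: "\<And>s t x. 0 \<le> s \<Longrightarrow> s \<le> t \<Longrightarrow> t \<le> T \<Longrightarrow> norm x \<le> Sx + 1 \<Longrightarrow> norm (DA t x - DA s x) \<le> C * (t - s) powr a"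
   and CA2: "\<And>s t x y. 0 \<le> s \<Longrightarrow> s \<le> t \<Longrightarrow> t \<le> T \<Longrightarrow> norm x \<le> Sx + 1 \<Longrightarrow> norm y \<le> Sx + 1 \<Longrightarrow>
      norm ((A t x - A s x) - (A t y - A s y)) \<le> C * (t - s) powr a * norm (x - y) powr b"
   and CDA2: "\<And>s t x y. 0 \<le> s \<Longrightarrow> s \<le> t \<Longrightarrow> t \<le> T \<Longrightarrow> norm x \<le> Sx + 1 \<Longrightarrow> norm y \<le> Sx + 1 \<Longrightarrow>
      norm ((DA t x - DA s x) - (DA t y - DA s y)) \<le> C * (t - s) powr a * norm (x - y) powr b"
    by (rule field_bounds[OF assms(11) R assms(1) assms(4) assms(6)]) (rule that; assumption)
  have derA: "\<forall>t\<in>{0..T}. \<forall>x. (A t has_derivative blinfun_apply (DA t x)) (at x)"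
    using assms(11) unfolding field_hoelder_loc_def by (rule conjunct1[OF conjunct2])
  interpret M: mainloc T a b g A DA x Sx Hx C
  proof
    show "T > 0" "0 < a" "a < 1" "0 < b" "b < 1" "0 < g" "g < 1" "a + b * g > 1" using assms by auto
    show "\<And>t z. 0 \<le> t \<Longrightarrow> t \<le> T \<Longrightarrow> (A t has_derivative blinfun_apply (DA t z)) (at z)" using derA by auto
    show "\<And>t. 0 \<le> t \<Longrightarrow> t \<le> T \<Longrightarrow> norm (x t) \<le> Sx" unfolding Sx_def by (rule HB(1))
    show "\<And>s t. 0 \<le> s \<Longrightarrow> s \<le> t \<Longrightarrow> t \<le> T \<Longrightarrow> norm (x t - x s) \<le> Hx * (t - s) powr g" unfolding Hx_def by (rule HB(2))
    show "Sx \<ge> 0" "Hx \<ge> 0" unfolding Sx_def Hx_def using HB(3,4) .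
    show "C \<ge> 0" by (rule C0)
  qed (fact CA CDA CA2 CDA2)+
  have Xn_eq: "M.Xn = (\<lambda>u v. A v (x u) - A u (x u))" by (intro ext) (simp add: M.Xn_def)
  have Xl_eq: "M.Xl y = (\<lambda>u v. blinfun_apply (DA v (x u) - DA u (x u)) (y u))" for y
    by (intro ext) (simp add: M.Xl_def)
  have nl_eq: "nl_int A x = psum_integral M.Xn" unfolding Xn_eq by (intro ext) (simp add: nl_int_def)
  have lin_eq: "lin_int DA x y = psum_integral (M.Xl y)" for y unfolding Xl_eq by (intro ext) (simp add: lin_int_def)
  note Sn = M.sew_n
  have g1: "\<forall>t\<in>{0..T}. \<exists>I. has_psum_integral (\<lambda>u v. A v (x u) - A u (x u)) t I"
    using Sn(1) unfolding Xn_eq by blast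
  have g2: "hoelder_path a T (nl_int A x)" unfolding nl_eq by (rule Sn(2))
  have SL: "(\<forall>t\<in>{0..T}. has_psum_integral (M.Xl y) t (psum_integral (M.Xl y) t))
      \<and> hoelder_path a T (psum_integral (M.Xl y))
      \<and> hoelder_norm a T (psum_integral (M.Xl y)) \<le> M.cs * (C * (1 + Hx powr b * T powr (a + g * b - M.th) + T powr (a + g - M.th))) * hoelder_norm g T y"
    if hy: "hoelder_path g T y" for y
  proof -
    note HBy = hoelder_bounds[OF hy assms(1)]
    note S = M.sew_l[OF HBy(5) HBy(6) HBy(7)]
    show ?thesis using S by blast
  qed
  have g3: "\<forall>y. hoelder_path g T y \<longrightarrow>
        (\<forall>t\<in>{0..T}. \<exists>I. has_psum_integral (\<lambda>u v. blinfun_apply (DA v (x u) - DA u (x u)) (y u)) t I)"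
  proof (intro allI impI)
    fix y :: "real \<Rightarrow> 'v" assume "hoelder_path g T y"
    then have "\<forall>t\<in>{0..T}. has_psum_integral (M.Xl y) t (psum_integral (M.Xl y) t)" using SL by blast
    then show "\<forall>t\<in>{0..T}. \<exists>I. has_psum_integral (\<lambda>u v. blinfun_apply (DA v (x u) - DA u (x u)) (y u)) t I"
      unfolding Xl_eq by blast
  qed
  have g4: "\<forall>y z c d. hoelder_path g T y \<and> hoelder_path g T z \<longrightarrow>
        (\<forall>t\<in>{0..T}. lin_int DA x (\<lambda>s. c *\<^sub>R y s + d *\<^sub>R z s) t
                     = c *\<^sub>R lin_int DA x y t + d *\<^sub>R lin_int DA x z t)"
  proof (intro allI impI ballI)
    fix y z :: "real \<Rightarrow> 'v" and c d :: real and t :: real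
    assume yz: "hoelder_path g T y \<and> hoelder_path g T z" and t: "t \<in> {0..T}"
    have hy: "has_psum_integral (M.Xl y) t (psum_integral (M.Xl y) t)" using SL yz t by blast
    have hz: "has_psum_integral (M.Xl z) t (psum_integral (M.Xl z) t)" using SL yz t by blast
    have h: "has_psum_integral (\<lambda>u v. c *\<^sub>R M.Xl y u v + d *\<^sub>R M.Xl z u v) t
        (c *\<^sub>R psum_integral (M.Xl y) t + d *\<^sub>R psum_integral (M.Xl z) t)"
      by (rule hpi_add[OF hpi_scale[OF hy] hpi_scale[OF hz]])
    have h2: "has_psum_integral (M.Xl (\<lambda>s. c *\<^sub>R y s + d *\<^sub>R z s)) t
        (c *\<^sub>R psum_integral (M.Xl y) t + d *\<^sub>R psum_integral (M.Xl z) t)"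
      by (rule hpi_cong[OF h]) (simp add: M.Xl_def blinfun.add_right blinfun.scaleR_right)
    show "lin_int DA x (\<lambda>s. c *\<^sub>R y s + d *\<^sub>R z s) t = c *\<^sub>R lin_int DA x y t + d *\<^sub>R lin_int DA x z t"
      unfolding lin_eq using psum_integral_eq[OF h2] t by simp
  qed
  have g5: "\<exists>C. \<forall>y. hoelder_path g T y \<longrightarrow>
        hoelder_path a T (lin_int DA x y) \<and>
        hoelder_norm a T (lin_int DA x y) \<le> C * hoelder_norm g T y"
    unfolding lin_eq using SL by blast
  have g6: "\<forall>e>0. \<exists>d>0. \<forall>y. hoelder_path g T y \<and> hoelder_norm g T y < d \<longrightarrow>
        hoelder_norm a T (\<lambda>t. nl_int A (\<lambda>s. x s + y s) t - nl_int A x t - lin_int DA x y t)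
          \<le> e * hoelder_norm g T y"
  proof (intro allI impI)
    fix e :: real assume e: "e > 0"
    define K3 where "K3 = C + 2 * C * Hx powr (b - M.rho) + C * T powr (a + g - M.th)"
    define cK where "cK = M.cs * K3"
    have cK: "cK \<ge> 0" unfolding cK_def K3_def using M.cstl C0 by simp
    define d where "d = min 1 ((e / (cK + 1)) powr (1 / M.rho))"
    have ep: "e / (cK + 1) > 0" using e cK by simp
    have d: "d > 0" unfolding d_def using ep e cK by auto
    show "\<exists>d>0. \<forall>y. hoelder_path g T y \<and> hoelder_norm g T y < d \<longrightarrow>
        hoelder_norm a T (\<lambda>t. nl_int A (\<lambda>s. x s + y s) t - nl_int A x t - lin_int DA x y t)
          \<le> e * hoelder_norm g T y"
    proof (intro exI[of _ d] conjI allI impI d)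
      fix y :: "real \<Rightarrow> 'v" assume yd: "hoelder_path g T y \<and> hoelder_norm g T y < d"
      define N where "N = hoelder_norm g T y"
      have hy: "hoelder_path g T y" using yd by simp
      note HBy = hoelder_bounds[OF hy assms(1)]
      have N0: "N \<ge> 0" unfolding N_def by (rule HBy(7))
      have Nd: "N < d" using yd unfolding N_def by simp
      then have N1: "N \<le> 1" unfolding d_def by simp
      have N1': "hoelder_norm g T y \<le> 1" using N1 unfolding N_def .
      note SR = M.sew_r[OF HBy(5) HBy(6) HBy(7) N1']
      have rem: "nl_int A (\<lambda>s. x s + y s) t - nl_int A x t - lin_int DA x y t = psum_integral (M.Xr y) t"
        if t: "0 \<le> t" "t \<le> T" for t
      proof -
        have h1: "has_psum_integral M.Xn t (psum_integral M.Xn t)" using Sn(1) t by simp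
        have h2: "has_psum_integral (M.Xl y) t (psum_integral (M.Xl y) t)" using SL[OF hy] t by simp
        have h3: "has_psum_integral (M.Xr y) t (psum_integral (M.Xr y) t)" using SR(1) t by simp
        have h: "has_psum_integral (\<lambda>u v. A v (x u + y u) - A u (x u + y u)) t
            (psum_integral M.Xn t + psum_integral (M.Xl y) t + psum_integral (M.Xr y) t)"
          by (rule hpi_cong[OF hpi_add[OF hpi_add[OF h1 h2] h3]]) (simp add: M.Xr_def)
        have "nl_int A (\<lambda>s. x s + y s) t = psum_integral M.Xn t + psum_integral (M.Xl y) t + psum_integral (M.Xr y) t"
          unfolding nl_int_def using psum_integral_eq[OF h] t by simp
        then show ?thesis unfolding nl_eq lin_eq by simp
      qed
      have "hoelder_norm a T (\<lambda>t. nl_int A (\<lambda>s. x s + y s) t - nl_int A x t - lin_int DA x y t)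
          = hoelder_norm a T (psum_integral (M.Xr y))"
        by (rule hoelder_cong(3)) (rule rem)
      also have "\<dots> \<le> cK * (N * N powr M.rho)" using SR(2) unfolding cK_def K3_def N_def by (simp add: mult.assoc)
      also have "\<dots> \<le> e * N"
      proof -
        have "N powr M.rho \<le> d powr M.rho" using N0 Nd M.cstl by (intro powr_mono2) auto
        also have "\<dots> \<le> ((e / (cK + 1)) powr (1 / M.rho)) powr M.rho"
          using d M.cstl unfolding d_def by (intro powr_mono2) auto
        also have "\<dots> = e / (cK + 1)" using ep M.cstl e cK by (simp add: powr_powr)
        finally have "N powr M.rho \<le> e / (cK + 1)" .
        then have "cK * N powr M.rho \<le> cK * (e / (cK + 1))" using cK by (rule mult_left_mono)
        also have "\<dots> \<le> e" using cK e by (simp add: field_simps)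
        finally have "cK * N powr M.rho \<le> e" .
        then have "N * (cK * N powr M.rho) \<le> N * e" using N0 by (rule mult_left_mono)
        then show ?thesis by (simp add: algebra_simps)
      qed
      finally show "hoelder_norm a T (\<lambda>t. nl_int A (\<lambda>s. x s + y s) t - nl_int A x t - lin_int DA x y t)
          \<le> e * hoelder_norm g T y" unfolding N_def .
    qed
  qed
  show "(\<forall>t\<in>{0..T}. \<exists>I. has_psum_integral (\<lambda>u v. A v (x u) - A u (x u)) t I)
   \<and> hoelder_path a T (nl_int A x)
   \<and> (\<forall>y. hoelder_path g T y \<longrightarrow>
        (\<forall>t\<in>{0..T}. \<exists>I. has_psum_integral (\<lambda>u v. blinfun_apply (DA v (x u) - DA u (x u)) (y u)) t I))
   \<and> (\<forall>y z c d. hoelder_path g T y \<and> hoelder_path g T z \<longrightarrow>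
        (\<forall>t\<in>{0..T}. lin_int DA x (\<lambda>s. c *\<^sub>R y s + d *\<^sub>R z s) t
                     = c *\<^sub>R lin_int DA x y t + d *\<^sub>R lin_int DA x z t))
   \<and> (\<exists>C. \<forall>y. hoelder_path g T y \<longrightarrow>
        hoelder_path a T (lin_int DA x y) \<and>
        hoelder_norm a T (lin_int DA x y) \<le> C * hoelder_norm g T y)
   \<and> (\<forall>e>0. \<exists>d>0. \<forall>y. hoelder_path g T y \<and> hoelder_norm g T y < d \<longrightarrow>
        hoelder_norm a T (\<lambda>t. nl_int A (\<lambda>s. x s + y s) t - nl_int A x t - lin_int DA x y t)
          \<le> e * hoelder_norm g T y)"
    by (rule conjI[OF g1 conjI[OF g2 conjI[OF g3 conjI[OF g4 conjI[OF g5 g6]]]]])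
qed


end
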